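(* Let $x:M^n\to\mathbb{R}^{n+1}$ be a locally strongly convex centroaffine hypersurface, and suppose there is a non-constant smooth function $\mu$ on $M^n$ such that $(\hat\nabla_ZK)(X,Y)=\mu\big(h(X,Y)Z+h(X,Z)Y+h(Y,Z)X\big)$ for all tangent vectors $X,Y,Z$ at every point. Let $p\in M^n$ be a point with $d\mu_p\ne0$, and let $\{e_1,\dots,e_n\}$ be an $h$-orthonormal basis of $T_pM^n$ such that $e_1$ maximizes $f(u)=h(K_uu,u)$ over the $h$-unit vectors $u\in T_pM^n$, $K_{e_1}e_i=\lambda_ie_i$ for all $i$, and $\lambda_1\ge2\lambda_i$ for $i\ge2$ (with $f(e_i)=0$ if $\lambda_1=2\lambda_i$). Then the number of distinct eigenvalues of $K_{e_1}$ is at most $3$, so that it equals $2$ or $3$.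
   Context: A centroaffine hypersurface is an immersion $x:M^n\to\mathbb{R}^{n+1}$ whose position vector is everywhere transversal to the tangent space; with $D$ the flat connection of $\mathbb{R}^{n+1}$, $D_Xx_*(Y)=x_*(\nabla_XY)+h(X,Y)(-\varepsilon x)$, $\varepsilon=\pm1$, defines the induced connection $\nabla$ and centroaffine metric $h$. Locally strongly convex means $h$ definite, and $\varepsilon$ is chosen so that $h$ is positive definite. $\hat\nabla$ is the Levi-Civita connection of $h$ and $K_XY=\nabla_XY-\hat\nabla_XY$ the difference tensor. *)

theory Defs
  imports "HOL-Analysis.Analysis"
begin

text \<open>Local (coordinate-chart) model of a centroaffine hypersurface:
  M is an open set U of real^'n, x : U -> real^'m with CARD('m) = CARD('n) + 1.
  Tangent vectors at u are identified with vectors of real^'n (constant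
  coordinate vector fields), x_* = frechet derivative of x.\<close>

fun iter_dd :: "('a::real_normed_vector \<Rightarrow> 'b::real_normed_vector) \<Rightarrow> 'a list \<Rightarrow> 'a \<Rightarrow> 'b" where
  "iter_dd f [] = f"
| "iter_dd f (v # vs) = (\<lambda>u. frechet_derivative (iter_dd f vs) (at u) v)"

definition smooth_on :: "'a::real_normed_vector set \<Rightarrow> ('a \<Rightarrow> 'b::real_normed_vector) \<Rightarrow> bool" where
  "smooth_on U f \<longleftrightarrow> (\<forall>vs. \<forall>u\<in>U. iter_dd f vs differentiable (at u))"

definition dx :: "(real^'n \<Rightarrow> real^'m) \<Rightarrow> real^'n \<Rightarrow> real^'n \<Rightarrow> real^'m" where
  "dx x u Y = frechet_derivative x (at u) Y"

definition ddx :: "(real^'n \<Rightarrow> real^'m) \<Rightarrow> real^'n \<Rightarrow> real^'n \<Rightarrow> real^'n \<Rightarrow> real^'m" where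
  "ddx x u X Y = frechet_derivative (\<lambda>w. dx x w Y) (at u) X"

definition centroaffine_immersion :: "(real^'n) set \<Rightarrow> (real^'n \<Rightarrow> real^'m) \<Rightarrow> bool" where
  "centroaffine_immersion U x \<longleftrightarrow> open U \<and> smooth_on U x \<and>
     (\<forall>u\<in>U. inj (dx x u) \<and> x u \<notin> range (dx x u))"

text \<open>Gauss formula  D_X x_*(Y) = x_*(nabla_X Y) + h(X,Y) (-eps x).\<close>
definition ca_h :: "real \<Rightarrow> (real^'n \<Rightarrow> real^'m) \<Rightarrow> real^'n \<Rightarrow> real^'n \<Rightarrow> real^'n \<Rightarrow> real" where
  "ca_h eps x u X Y = (THE c. \<exists>t. ddx x u X Y = dx x u t + c *\<^sub>R ((- eps) *\<^sub>R x u))"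

definition ca_nabla :: "real \<Rightarrow> (real^'n \<Rightarrow> real^'m) \<Rightarrow> real^'n \<Rightarrow> real^'n \<Rightarrow> real^'n \<Rightarrow> real^'n" where
  "ca_nabla eps x u X Y = (THE t. \<exists>c. ddx x u X Y = dx x u t + c *\<^sub>R ((- eps) *\<^sub>R x u))"

definition ca_dh :: "real \<Rightarrow> (real^'n \<Rightarrow> real^'m) \<Rightarrow> real^'n \<Rightarrow> real^'n \<Rightarrow> real^'n \<Rightarrow> real^'n \<Rightarrow> real" where
  "ca_dh eps x u Z X Y = frechet_derivative (\<lambda>w. ca_h eps x w X Y) (at u) Z"

text \<open>Levi-Civita connection of h (Koszul formula for coordinate fields).\<close>
definition ca_LC :: "real \<Rightarrow> (real^'n \<Rightarrow> real^'m) \<Rightarrow> real^'n \<Rightarrow> real^'n \<Rightarrow> real^'n \<Rightarrow> real^'n" where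
  "ca_LC eps x u X Y = (THE t. \<forall>Z. ca_h eps x u t Z =
      (ca_dh eps x u X Y Z + ca_dh eps x u Y X Z - ca_dh eps x u Z X Y) / 2)"

definition ca_K :: "real \<Rightarrow> (real^'n \<Rightarrow> real^'m) \<Rightarrow> real^'n \<Rightarrow> real^'n \<Rightarrow> real^'n \<Rightarrow> real^'n" where
  "ca_K eps x u X Y = ca_nabla eps x u X Y - ca_LC eps x u X Y"

definition ca_covK :: "real \<Rightarrow> (real^'n \<Rightarrow> real^'m) \<Rightarrow> real^'n \<Rightarrow> real^'n \<Rightarrow> real^'n \<Rightarrow> real^'n \<Rightarrow> real^'n" where
  "ca_covK eps x u Z X Y =
     frechet_derivative (\<lambda>w. ca_K eps x w X Y) (at u) Z
     + ca_LC eps x u Z (ca_K eps x u X Y)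
     - ca_K eps x u (ca_LC eps x u Z X) Y
     - ca_K eps x u X (ca_LC eps x u Z Y)"

definition loc_strongly_convex :: "real \<Rightarrow> (real^'n) set \<Rightarrow> (real^'n \<Rightarrow> real^'m) \<Rightarrow> bool" where
  "loc_strongly_convex eps U x \<longleftrightarrow> (eps = 1 \<or> eps = -1) \<and>
     (\<forall>u\<in>U. \<forall>X. X \<noteq> 0 \<longrightarrow> ca_h eps x u X X > 0)"

end

theory Submission
  imports Defs
begin


lemma hd_nth:
  assumes "(F has_derivative F') (at u)"
  shows "((\<lambda>w. F w $ k) has_derivative (\<lambda>v. F' v $ k)) (at u)"
  using bounded_linear.has_derivative[OF bounded_linear_vec_nth assms] .

lemma vec_has_derivative:
  fixes F :: "'a::real_normed_vector \<Rightarrow> real^'k"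
  assumes "\<And>k. ((\<lambda>w. F w $ k) has_derivative (\<lambda>v. F' v $ k)) (at u)"
  shows "(F has_derivative F') (at u)"
proof (subst has_derivative_componentwise_within, intro ballI)
  fix i :: "real^'k" assume "i \<in> Basis"
  then obtain k where i: "i = axis k 1" unfolding Basis_vec_def by auto
  have e: "\<And>y::real^'k. y \<bullet> i = y $ k" unfolding i by (simp add: inner_axis)
  show "((\<lambda>x. F x \<bullet> i) has_derivative (\<lambda>x. F' x \<bullet> i)) (at u)"
    unfolding e using assms[of k] .
qed

inductive_set SM :: "(real^'n) set \<Rightarrow> (real^'n \<Rightarrow> real^'m) \<Rightarrow> (real^'n \<Rightarrow> real) set"
  for U x where
  gen: "(\<lambda>u. iter_dd x vs u $ k) \<in> SM U x"
| cst: "(\<lambda>u. c) \<in> SM U x"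
| add: "f \<in> SM U x \<Longrightarrow> g \<in> SM U x \<Longrightarrow> (\<lambda>u. f u + g u) \<in> SM U x"
| mul: "f \<in> SM U x \<Longrightarrow> g \<in> SM U x \<Longrightarrow> (\<lambda>u. f u * g u) \<in> SM U x"
| inv: "f \<in> SM U x \<Longrightarrow> (\<forall>u\<in>U. f u \<noteq> 0) \<Longrightarrow> (\<lambda>u. inverse (f u)) \<in> SM U x"
| cong: "f \<in> SM U x \<Longrightarrow> (\<forall>u\<in>U. g u = f u) \<Longrightarrow> g \<in> SM U x"

lemma fd_eq:
  assumes "(f has_derivative f') (at u)"
  shows "frechet_derivative f (at u) = f'"
  using frechet_derivative_at[OF assms] by simp

lemma SM_deriv:
  assumes U: "open U" and sx: "smooth_on U x" and f: "f \<in> SM U x"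
  shows "(\<forall>u\<in>U. (f has_derivative frechet_derivative f (at u)) (at u)) \<and>
         (\<forall>v. (\<lambda>u. frechet_derivative f (at u) v) \<in> SM U x)"
  using f
proof induction
  case (gen vs k)
  have d: "\<And>u. u \<in> U \<Longrightarrow> (iter_dd x vs has_derivative frechet_derivative (iter_dd x vs) (at u)) (at u)"
    using sx unfolding smooth_on_def by (simp add: frechet_derivative_works)
  have d2: "\<And>u. u \<in> U \<Longrightarrow> ((\<lambda>u. iter_dd x vs u $ k) has_derivative (\<lambda>v. frechet_derivative (iter_dd x vs) (at u) v $ k)) (at u)"
    by (rule hd_nth[OF d])
  show ?case
  proof (intro conjI ballI allI)
    fix u assume "u \<in> U" thus "((\<lambda>u. iter_dd x vs u $ k) has_derivative frechet_derivative (\<lambda>u. iter_dd x vs u $ k) (at u)) (at u)"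
      using d2 fd_eq by metis
  next
    fix v
    show "(\<lambda>u. frechet_derivative (\<lambda>u. iter_dd x vs u $ k) (at u) v) \<in> SM U x"
    proof (rule SM.cong[OF SM.gen[of x "v # vs" k]], intro ballI)
      fix u assume "u \<in> U"
      show "frechet_derivative (\<lambda>u. iter_dd x vs u $ k) (at u) v = iter_dd x (v # vs) u $ k"
        using fd_eq[OF d2[OF \<open>u \<in> U\<close>]] by simp
    qed
  qed
next
  case (cst c)
  have "\<And>u. frechet_derivative (\<lambda>u. c) (at u) = (\<lambda>v. 0)" by (rule fd_eq) simp
  then show ?case by (auto intro: SM.cst)
next
  case (add f g)
  have e: "\<And>u. u \<in> U \<Longrightarrow> frechet_derivative (\<lambda>u. f u + g u) (at u) = (\<lambda>v. frechet_derivative f (at u) v + frechet_derivative g (at u) v)"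
    using add by (intro fd_eq) (auto intro!: derivative_eq_intros)
  show ?case
  proof (intro conjI ballI allI)
    fix u assume u: "u \<in> U"
    show "((\<lambda>u. f u + g u) has_derivative frechet_derivative (\<lambda>u. f u + g u) (at u)) (at u)"
      unfolding e[OF u] using add u by (auto intro!: derivative_eq_intros)
  next
    fix v show "(\<lambda>u. frechet_derivative (\<lambda>u. f u + g u) (at u) v) \<in> SM U x"
      by (rule SM.cong[OF SM.add[where f="\<lambda>u. frechet_derivative f (at u) v" and g="\<lambda>u. frechet_derivative g (at u) v"]]) (use add e in auto)
  qed
next
  case (mul f g)
  have e: "\<And>u. u \<in> U \<Longrightarrow> frechet_derivative (\<lambda>u. f u * g u) (at u) = (\<lambda>v. f u * frechet_derivative g (at u) v + frechet_derivative f (at u) v * g u)"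
    using mul by (intro fd_eq) (auto intro!: derivative_eq_intros)
  show ?case
  proof (intro conjI ballI allI)
    fix u assume u: "u \<in> U"
    show "((\<lambda>u. f u * g u) has_derivative frechet_derivative (\<lambda>u. f u * g u) (at u)) (at u)"
      unfolding e[OF u] using mul u by (auto intro!: derivative_eq_intros)
  next
    fix v show "(\<lambda>u. frechet_derivative (\<lambda>u. f u * g u) (at u) v) \<in> SM U x"
      by (rule SM.cong[OF SM.add[OF SM.mul[where f=f and g="\<lambda>u. frechet_derivative g (at u) v"] SM.mul[where f="\<lambda>u. frechet_derivative f (at u) v" and g=g]]]) (use mul e in auto)
  qed
next
  case (inv f)
  have e: "\<And>u. u \<in> U \<Longrightarrow> frechet_derivative (\<lambda>u. inverse (f u)) (at u) = (\<lambda>v. - (inverse (f u) * frechet_derivative f (at u) v * inverse (f u)))"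
    using inv by (intro fd_eq) (auto intro!: derivative_eq_intros)
  show ?case
  proof (intro conjI ballI allI)
    fix u assume u: "u \<in> U"
    show "((\<lambda>u. inverse (f u)) has_derivative frechet_derivative (\<lambda>u. inverse (f u)) (at u)) (at u)"
      unfolding e[OF u] using inv u by (auto intro!: derivative_eq_intros)
  next
    fix v
    have "(\<lambda>u. (-1) * ((inverse (f u) * frechet_derivative f (at u) v) * inverse (f u))) \<in> SM U x"
      using inv by (intro SM.mul SM.cst SM.inv) auto
    then show "(\<lambda>u. frechet_derivative (\<lambda>u. inverse (f u)) (at u) v) \<in> SM U x"
      by (rule SM.cong) (use e in auto)
  qed
next
  case (cong f g)
  have e: "\<And>u. u \<in> U \<Longrightarrow> frechet_derivative g (at u) = frechet_derivative f (at u)"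
  proof -
    fix u assume u: "u \<in> U"
    have "(g has_derivative frechet_derivative f (at u)) (at u)"
      by (rule has_derivative_transform_within_open[OF _ U u]) (use cong u in auto)
    then show "frechet_derivative g (at u) = frechet_derivative f (at u)" by (rule fd_eq)
  qed
  show ?case
  proof (intro conjI ballI allI)
    fix u assume u: "u \<in> U"
    show "(g has_derivative frechet_derivative g (at u)) (at u)"
      unfolding e[OF u]
      by (rule has_derivative_transform_within_open[OF _ U u]) (use cong u in auto)
  next
    fix v show "(\<lambda>u. frechet_derivative g (at u) v) \<in> SM U x"
      by (rule SM.cong[where f="\<lambda>u. frechet_derivative f (at u) v"]) (use cong e in auto)
  qed
qed


locale smctx =
  fixes U :: "(real^'n) set" and x :: "real^'n \<Rightarrow> real^'m"
  assumes opU: "open U" and sx: "smooth_on U x"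
begin

abbreviation "S \<equiv> SM U x"

lemma S_hasd: "f \<in> S \<Longrightarrow> u \<in> U \<Longrightarrow> (f has_derivative frechet_derivative f (at u)) (at u)"
  using SM_deriv[OF opU sx] by blast

lemma S_d: "f \<in> S \<Longrightarrow> (\<lambda>u. frechet_derivative f (at u) v) \<in> S"
  using SM_deriv[OF opU sx] by blast

lemma S_lin: "f \<in> S \<Longrightarrow> u \<in> U \<Longrightarrow> linear (frechet_derivative f (at u))"
  using S_hasd has_derivative_linear by blast

lemma S_cong: "f \<in> S \<Longrightarrow> (\<And>u. u \<in> U \<Longrightarrow> g u = f u) \<Longrightarrow> g \<in> S"
  using SM.cong by blast

lemma S_cst: "(\<lambda>u. c) \<in> S" by (rule SM.cst)
lemma S_add: "f \<in> S \<Longrightarrow> g \<in> S \<Longrightarrow> (\<lambda>u. f u + g u) \<in> S" by (rule SM.add)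
lemma S_mul: "f \<in> S \<Longrightarrow> g \<in> S \<Longrightarrow> (\<lambda>u. f u * g u) \<in> S" by (rule SM.mul)
lemma S_inv: "f \<in> S \<Longrightarrow> (\<And>u. u \<in> U \<Longrightarrow> f u \<noteq> 0) \<Longrightarrow> (\<lambda>u. inverse (f u)) \<in> S"
  by (rule SM.inv) auto
lemma S_gen: "(\<lambda>u. iter_dd x vs u $ k) \<in> S" by (rule SM.gen)

lemma S_neg: "f \<in> S \<Longrightarrow> (\<lambda>u. - f u) \<in> S"
  using S_mul[OF S_cst[of "-1"]] by simp
lemma S_diff: "f \<in> S \<Longrightarrow> g \<in> S \<Longrightarrow> (\<lambda>u. f u - g u) \<in> S"
  using S_add[OF _ S_neg, of f g] by simp
lemma S_cmul: "f \<in> S \<Longrightarrow> (\<lambda>u. c * f u) \<in> S"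
  using S_mul[OF S_cst] by simp
lemma S_div: "f \<in> S \<Longrightarrow> g \<in> S \<Longrightarrow> (\<And>u. u \<in> U \<Longrightarrow> g u \<noteq> 0) \<Longrightarrow> (\<lambda>u. f u / g u) \<in> S"
  using S_mul[OF _ S_inv, of f g] by (simp add: divide_inverse)

lemma S_sum: "finite A \<Longrightarrow> (\<And>a. a \<in> A \<Longrightarrow> (\<lambda>u. F a u) \<in> S) \<Longrightarrow> (\<lambda>u. \<Sum>a\<in>A. F a u) \<in> S"
proof (induction A rule: finite_induct)
  case empty then show ?case using S_cst[of 0] by simp
next
  case (insert a A) then show ?case using S_add[of "F a" "\<lambda>u. \<Sum>a\<in>A. F a u"] by simp
qed

lemma S_prod: "finite A \<Longrightarrow> (\<And>a. a \<in> A \<Longrightarrow> (\<lambda>u. F a u) \<in> S) \<Longrightarrow> (\<lambda>u. \<Prod>a\<in>A. F a u) \<in> S"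
proof (induction A rule: finite_induct)
  case empty then show ?case using S_cst[of 1] by simp
next
  case (insert a A) then show ?case using S_mul[of "F a" "\<lambda>u. \<Prod>a\<in>A. F a u"] by simp
qed

lemma S_det:
  fixes A :: "real^'n \<Rightarrow> real^'k^'k"
  assumes "\<And>i j. (\<lambda>u. A u $ i $ j) \<in> S"
  shows "(\<lambda>u. det (A u)) \<in> S"
  unfolding det_def
  by (intro S_sum S_mul S_cst S_prod assms) auto

end


lemma line_deriv:
  fixes g :: "'a::real_normed_vector \<Rightarrow> real"
  assumes "(g has_derivative g') (at (a + t *\<^sub>R W))"
  shows "((\<lambda>t. g (a + t *\<^sub>R W)) has_field_derivative g' W) (at t)"
proof -
  have l: "linear g'" using assms has_derivative_linear by blast
  have "((\<lambda>t. a + t *\<^sub>R W) has_derivative (\<lambda>h. h *\<^sub>R W)) (at t)"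
    by (auto intro!: derivative_eq_intros)
  from has_derivative_compose[OF this assms]
  have "((\<lambda>t. g (a + t *\<^sub>R W)) has_derivative (\<lambda>h. g' (h *\<^sub>R W))) (at t)" by (simp add: o_def)
  moreover have "(\<lambda>h. g' (h *\<^sub>R W)) = (*) (g' W)"
    using linear_cmul[OF l] by (auto simp: fun_eq_iff)
  ultimately show ?thesis unfolding has_field_derivative_def by simp
qed

context smctx begin

lemma mvt_step:
  assumes f: "f \<in> S" and s: "0 < s" and box: "\<And>a b. 0 \<le> a \<Longrightarrow> a \<le> s \<Longrightarrow> 0 \<le> b \<Longrightarrow> b \<le> s \<Longrightarrow> u + a *\<^sub>R W + b *\<^sub>R Z \<in> U"
  shows "\<exists>a b. 0 < a \<and> a < s \<and> 0 < b \<and> b < s \<and>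
    f (u + s *\<^sub>R W + s *\<^sub>R Z) - f (u + s *\<^sub>R W) - f (u + s *\<^sub>R Z) + f u =
    s * s * frechet_derivative (\<lambda>y. frechet_derivative f (at y) W) (at (u + a *\<^sub>R W + b *\<^sub>R Z)) Z"
proof -
  define g where "g t = f (u + s *\<^sub>R Z + t *\<^sub>R W) - f (u + t *\<^sub>R W)" for t
  define \<phi> where "\<phi> y = frechet_derivative f (at y) W" for y
  have \<phi>S: "\<phi> \<in> S" unfolding \<phi>_def by (rule S_d[OF f])
  have "\<And>t. 0 \<le> t \<Longrightarrow> t \<le> s \<Longrightarrow> (g has_field_derivative (\<phi> (u + s *\<^sub>R Z + t *\<^sub>R W) - \<phi> (u + t *\<^sub>R W))) (at t)"
  proof -
    fix t assume t: "0 \<le> t" "t \<le> s"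
    have i1: "u + s *\<^sub>R Z + t *\<^sub>R W \<in> U" using box[of t s] t s by (simp add: algebra_simps)
    have i2: "u + t *\<^sub>R W \<in> U" using box[of t 0] t s by simp
    show "(g has_field_derivative (\<phi> (u + s *\<^sub>R Z + t *\<^sub>R W) - \<phi> (u + t *\<^sub>R W))) (at t)"
      unfolding g_def \<phi>_def
      by (intro DERIV_diff line_deriv S_hasd[OF f] i1 i2)
  qed
  from MVT2[OF s this]
  obtain a where a: "0 < a" "a < s" and ga: "g s - g 0 = (s - 0) * (\<phi> (u + s *\<^sub>R Z + a *\<^sub>R W) - \<phi> (u + a *\<^sub>R W))"
    by auto
  define k where "k t = \<phi> (u + a *\<^sub>R W + t *\<^sub>R Z)" for t
  have "\<And>t. 0 \<le> t \<Longrightarrow> t \<le> s \<Longrightarrow> (k has_field_derivative frechet_derivative \<phi> (at (u + a *\<^sub>R W + t *\<^sub>R Z)) Z) (at t)"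
  proof -
    fix t assume t: "0 \<le> t" "t \<le> s"
    have i1: "u + a *\<^sub>R W + t *\<^sub>R Z \<in> U" using box[of a t] t a by simp
    show "(k has_field_derivative frechet_derivative \<phi> (at (u + a *\<^sub>R W + t *\<^sub>R Z)) Z) (at t)"
      unfolding k_def by (intro line_deriv S_hasd[OF \<phi>S] i1)
  qed
  from MVT2[OF s this]
  obtain b where b: "0 < b" "b < s" and kb: "k s - k 0 = (s - 0) * frechet_derivative \<phi> (at (u + a *\<^sub>R W + b *\<^sub>R Z)) Z"
    by auto
  have "f (u + s *\<^sub>R W + s *\<^sub>R Z) - f (u + s *\<^sub>R W) - f (u + s *\<^sub>R Z) + f u = g s - g 0"
    unfolding g_def by (simp add: algebra_simps)
  also have "\<dots> = s * (k s - k 0)" unfolding ga k_def by (simp add: algebra_simps)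
  also have "\<dots> = s * s * frechet_derivative \<phi> (at (u + a *\<^sub>R W + b *\<^sub>R Z)) Z" unfolding kb by simp
  finally show ?thesis using a b unfolding \<phi>_def by blast
qed

lemma schwarz:
  assumes f: "f \<in> S" and u: "u \<in> U"
  shows "frechet_derivative (\<lambda>y. frechet_derivative f (at y) W) (at u) Z =
         frechet_derivative (\<lambda>y. frechet_derivative f (at y) Z) (at u) W"
proof (rule ccontr)
  define \<psi> where "\<psi> y = frechet_derivative (\<lambda>y. frechet_derivative f (at y) W) (at y) Z" for y
  define \<psi>' where "\<psi>' y = frechet_derivative (\<lambda>y. frechet_derivative f (at y) Z) (at y) W" for y
  assume ne: "\<not> ?thesis"
  hence ne': "\<psi> u \<noteq> \<psi>' u" unfolding \<psi>_def \<psi>'_def .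
  define d where "d = \<bar>\<psi> u - \<psi>' u\<bar>"
  have d: "d > 0" using ne' unfolding d_def by simp
  have \<psi>S: "\<psi> \<in> S" unfolding \<psi>_def by (intro S_d f)
  have \<psi>'S: "\<psi>' \<in> S" unfolding \<psi>'_def by (intro S_d f)
  have c1: "continuous (at u) \<psi>" using S_hasd[OF \<psi>S u] has_derivative_continuous by blast
  have c2: "continuous (at u) \<psi>'" using S_hasd[OF \<psi>'S u] has_derivative_continuous by blast
  obtain d1 where d1: "d1 > 0" "\<And>y. dist y u < d1 \<Longrightarrow> dist (\<psi> y) (\<psi> u) < d/2"
    using c1 d unfolding continuous_at_eps_delta by (metis half_gt_zero)
  obtain d2 where d2: "d2 > 0" "\<And>y. dist y u < d2 \<Longrightarrow> dist (\<psi>' y) (\<psi>' u) < d/2"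
    using c2 d unfolding continuous_at_eps_delta by (metis half_gt_zero)
  obtain r where r: "r > 0" "ball u r \<subseteq> U" using opU u open_contains_ball by blast
  define m where "m = min r (min d1 d2)"
  have m: "m > 0" using r d1 d2 unfolding m_def by simp
  define s where "s = m / (2 * (norm W + norm Z + 1))"
  have pz: "2 * (norm W + norm Z + 1) > 0" by (smt (verit) norm_ge_zero)
  have s: "s > 0" using m pz unfolding s_def by (simp only: divide_pos_pos)
  have sm: "s * (norm W + norm Z) < m"
  proof -
    have "s * (norm W + norm Z) \<le> s * (norm W + norm Z + 1)" using s by simp
    also have "\<dots> = m / 2" unfolding s_def using pz by (simp add: field_simps)
    finally show ?thesis using m by simp
  qed
  have near: "\<And>a b. 0 \<le> a \<Longrightarrow> a \<le> s \<Longrightarrow> 0 \<le> b \<Longrightarrow> b \<le> s \<Longrightarrow> dist (u + a *\<^sub>R W + b *\<^sub>R Z) u < m"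
  proof -
    fix a b :: real assume ab: "0 \<le> a" "a \<le> s" "0 \<le> b" "b \<le> s"
    have "dist (u + a *\<^sub>R W + b *\<^sub>R Z) u = norm (a *\<^sub>R W + b *\<^sub>R Z)" by (simp add: dist_norm)
    also have "\<dots> \<le> a * norm W + b * norm Z"
      using norm_triangle_ineq[of "a *\<^sub>R W" "b *\<^sub>R Z"] ab by simp
    also have "\<dots> \<le> s * norm W + s * norm Z"
      using ab by (intro add_mono mult_right_mono) auto
    finally show "dist (u + a *\<^sub>R W + b *\<^sub>R Z) u < m" using sm by (simp add: algebra_simps)
  qed
  have box1: "\<And>a b. 0 \<le> a \<Longrightarrow> a \<le> s \<Longrightarrow> 0 \<le> b \<Longrightarrow> b \<le> s \<Longrightarrow> u + a *\<^sub>R W + b *\<^sub>R Z \<in> U"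
  proof -
    fix a b :: real assume ab: "0 \<le> a" "a \<le> s" "0 \<le> b" "b \<le> s"
    have "dist (u + a *\<^sub>R W + b *\<^sub>R Z) u < r" using near[OF ab] unfolding m_def by simp
    then show "u + a *\<^sub>R W + b *\<^sub>R Z \<in> U" using r by (auto simp: dist_commute)
  qed
  have box2: "\<And>a b. 0 \<le> a \<Longrightarrow> a \<le> s \<Longrightarrow> 0 \<le> b \<Longrightarrow> b \<le> s \<Longrightarrow> u + a *\<^sub>R Z + b *\<^sub>R W \<in> U"
  proof -
    fix a b :: real assume ab: "0 \<le> a" "a \<le> s" "0 \<le> b" "b \<le> s"
    have "u + b *\<^sub>R W + a *\<^sub>R Z \<in> U" using box1 ab by blast
    then show "u + a *\<^sub>R Z + b *\<^sub>R W \<in> U" by (simp add: algebra_simps)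
  qed
  obtain a b where ab: "0 < a" "a < s" "0 < b" "b < s" and e1:
    "f (u + s *\<^sub>R W + s *\<^sub>R Z) - f (u + s *\<^sub>R W) - f (u + s *\<^sub>R Z) + f u = s * s * \<psi> (u + a *\<^sub>R W + b *\<^sub>R Z)"
    using mvt_step[OF f s box1] unfolding \<psi>_def by blast
  obtain a' b' where ab': "0 < a'" "a' < s" "0 < b'" "b' < s" and e2:
    "f (u + s *\<^sub>R Z + s *\<^sub>R W) - f (u + s *\<^sub>R Z) - f (u + s *\<^sub>R W) + f u = s * s * \<psi>' (u + a' *\<^sub>R Z + b' *\<^sub>R W)"
    using mvt_step[OF f s box2] unfolding \<psi>'_def by blast
  have "s * s * \<psi> (u + a *\<^sub>R W + b *\<^sub>R Z) = s * s * \<psi>' (u + a' *\<^sub>R Z + b' *\<^sub>R W)"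
    using e1 e2 by (simp add: algebra_simps)
  hence eq: "\<psi> (u + a *\<^sub>R W + b *\<^sub>R Z) = \<psi>' (u + a' *\<^sub>R Z + b' *\<^sub>R W)" using s by simp
  have "dist (u + a *\<^sub>R W + b *\<^sub>R Z) u < d1" using near[of a b] ab unfolding m_def by simp
  hence x1: "dist (\<psi> (u + a *\<^sub>R W + b *\<^sub>R Z)) (\<psi> u) < d/2" using d1 by blast
  have "dist (u + b' *\<^sub>R W + a' *\<^sub>R Z) u < d2" using near[of b' a'] ab' unfolding m_def by simp
  hence x2: "dist (\<psi>' (u + a' *\<^sub>R Z + b' *\<^sub>R W)) (\<psi>' u) < d/2" using d2 by (simp add: algebra_simps)
  have "d \<le> dist (\<psi> (u + a *\<^sub>R W + b *\<^sub>R Z)) (\<psi> u) + dist (\<psi>' (u + a' *\<^sub>R Z + b' *\<^sub>R W)) (\<psi>' u)"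
    unfolding d_def dist_real_def eq by linarith
  with x1 x2 show False by simp
qed

end


context smctx begin

definition VS :: "(real^'n \<Rightarrow> real^'k) \<Rightarrow> bool" where
  "VS F \<longleftrightarrow> (\<forall>k. (\<lambda>w. F w $ k) \<in> S)"

lemma VS_comp: "VS F \<Longrightarrow> (\<lambda>w. F w $ k) \<in> S" unfolding VS_def by blast

lemma VS_hasd: assumes "VS F" "u \<in> U"
  shows "(F has_derivative (\<lambda>v. \<chi> k. frechet_derivative (\<lambda>w. F w $ k) (at u) v)) (at u)"
  by (rule vec_has_derivative) (use S_hasd[OF VS_comp[OF assms(1)] assms(2)] in simp)

lemma VS_fd: assumes "VS F" "u \<in> U"
  shows "frechet_derivative F (at u) = (\<lambda>v. \<chi> k. frechet_derivative (\<lambda>w. F w $ k) (at u) v)"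
  by (rule fd_eq[OF VS_hasd[OF assms]])

lemma VS_hasd': assumes "VS F" "u \<in> U"
  shows "(F has_derivative frechet_derivative F (at u)) (at u)"
  using VS_hasd[OF assms] VS_fd[OF assms] by simp

lemma VS_nth: assumes "VS F" "u \<in> U"
  shows "frechet_derivative F (at u) v $ k = frechet_derivative (\<lambda>w. F w $ k) (at u) v"
  using VS_fd[OF assms] by simp

lemma VS_d: assumes "VS F" shows "VS (\<lambda>w. frechet_derivative F (at w) v)"
  unfolding VS_def
proof
  fix k show "(\<lambda>w. frechet_derivative F (at w) v $ k) \<in> S"
    by (rule S_cong[OF S_d[OF VS_comp[OF assms], of k v]]) (use VS_nth[OF assms] in simp)
qed

lemma VS_lin: "VS F \<Longrightarrow> u \<in> U \<Longrightarrow> linear (frechet_derivative F (at u))"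
  using VS_hasd' has_derivative_linear by blast

lemma VS_cong: assumes "VS F" "\<And>u. u \<in> U \<Longrightarrow> G u = F u" shows "VS G"
  unfolding VS_def
proof
  fix k show "(\<lambda>w. G w $ k) \<in> S" by (rule S_cong[OF VS_comp[OF assms(1), of k]]) (simp add: assms(2))
qed

lemma VS_I: "(\<And>k. (\<lambda>w. F w $ k) \<in> S) \<Longrightarrow> VS F" unfolding VS_def by blast

lemma fd_cong_open: assumes "(F has_derivative F') (at u)" "u \<in> U" "\<And>w. w \<in> U \<Longrightarrow> G w = F w"
  shows "frechet_derivative G (at u) = F'"
proof -
  have "(G has_derivative F') (at u)"
    by (rule has_derivative_transform_within_open[OF assms(1) opU assms(2)]) (use assms(3) in auto)
  then show ?thesis by (rule fd_eq)
qed

lemma VS_fd_cong: "VS F \<Longrightarrow> u \<in> U \<Longrightarrow> (\<And>w. w \<in> U \<Longrightarrow> G w = F w) \<Longrightarrow>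
   frechet_derivative G (at u) = frechet_derivative F (at u)"
  by (rule fd_cong_open[OF VS_hasd']) auto

lemma VS_schwarz: assumes "VS F" "u \<in> U"
  shows "frechet_derivative (\<lambda>y. frechet_derivative F (at y) W) (at u) Z =
         frechet_derivative (\<lambda>y. frechet_derivative F (at y) Z) (at u) W"
proof -
  have "frechet_derivative (\<lambda>y. frechet_derivative F (at y) W) (at u) Z $ k =
         frechet_derivative (\<lambda>y. frechet_derivative F (at y) Z) (at u) W $ k" for k
  proof -
    have e: "\<And>V. frechet_derivative (\<lambda>y. \<chi> k. frechet_derivative (\<lambda>w. F w $ k) (at y) V) (at u) =
       frechet_derivative (\<lambda>y. frechet_derivative F (at y) V) (at u)"
      by (rule VS_fd_cong[OF VS_d[OF assms(1)] assms(2)]) (simp add: VS_fd[OF assms(1)])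
    have vs: "\<And>V. VS (\<lambda>y. \<chi> k. frechet_derivative (\<lambda>w. F w $ k) (at y) V)"
      by (rule VS_I) (simp add: S_d VS_comp[OF assms(1)])
    show ?thesis unfolding e[symmetric] using VS_nth[OF vs assms(2)] schwarz[OF VS_comp[OF assms(1)] assms(2)] by simp
  qed
  then show ?thesis by (simp add: vec_eq_iff)
qed

lemma VS_add: "VS F \<Longrightarrow> VS G \<Longrightarrow> VS (\<lambda>w. F w + G w)"
  unfolding VS_def by (simp add: S_add)
lemma VS_diff: "VS F \<Longrightarrow> VS G \<Longrightarrow> VS (\<lambda>w. F w - G w)"
  unfolding VS_def by (simp add: S_diff)
lemma VS_scale: "f \<in> S \<Longrightarrow> VS G \<Longrightarrow> VS (\<lambda>w. f w *\<^sub>R G w)"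
  unfolding VS_def by (simp add: S_mul)
lemma VS_const: "VS (\<lambda>w. c)"
  unfolding VS_def by (simp add: S_cst)
lemma VS_sum: "finite A \<Longrightarrow> (\<And>a. a \<in> A \<Longrightarrow> VS (F a)) \<Longrightarrow> VS (\<lambda>w. \<Sum>a\<in>A. F a w)"
  unfolding VS_def by (simp add: sum_component S_sum)

lemma param_linear:
  fixes F :: "real^'n \<Rightarrow> 'a::real_vector \<Rightarrow> real^'k"
  assumes vs: "\<And>a. VS (\<lambda>w. F w a)" and lin: "\<And>w. w \<in> U \<Longrightarrow> linear (F w)" and u: "u \<in> U"
  shows "linear (\<lambda>a. frechet_derivative (\<lambda>w. F w a) (at u) W)"
proof (rule linearI)
  fix a b
  have "frechet_derivative (\<lambda>w. F w (a + b)) (at u) = (\<lambda>v. frechet_derivative (\<lambda>w. F w a) (at u) v + frechet_derivative (\<lambda>w. F w b) (at u) v)"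
    by (rule fd_cong_open[OF _ u]) (auto intro!: derivative_eq_intros VS_hasd'[OF vs u] simp: linear_add[OF lin])
  then show "frechet_derivative (\<lambda>w. F w (a + b)) (at u) W = frechet_derivative (\<lambda>w. F w a) (at u) W + frechet_derivative (\<lambda>w. F w b) (at u) W"
    by simp
next
  fix c :: real and a
  have "frechet_derivative (\<lambda>w. F w (c *\<^sub>R a)) (at u) = (\<lambda>v. c *\<^sub>R frechet_derivative (\<lambda>w. F w a) (at u) v)"
    by (rule fd_cong_open[OF _ u]) (auto intro!: derivative_eq_intros VS_hasd'[OF vs u] simp: linear_cmul[OF lin])
  then show "frechet_derivative (\<lambda>w. F w (c *\<^sub>R a)) (at u) W = c *\<^sub>R frechet_derivative (\<lambda>w. F w a) (at u) W"
    by simp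
qed

end


lemma sum_option_univ: "(\<Sum>z\<in>(UNIV :: 'a::finite option set). g z) = g None + (\<Sum>k\<in>UNIV. g (Some k))"
proof -
  have "(\<Sum>z\<in>(UNIV :: 'a option set). g z) = (\<Sum>z\<in>insert None (range Some). g z)"
    by (simp add: UNIV_option_conv[symmetric])
  also have "\<dots> = g None + (\<Sum>z\<in>range Some. g z)" by (subst sum.insert) auto
  also have "(\<Sum>z\<in>range Some. g z) = (\<Sum>k\<in>UNIV. g (Some k))" by (subst sum.reindex) (auto simp: inj_on_def)
  finally show ?thesis .
qed

lemma smult_scaleR: "c *s v = c *\<^sub>R (v::real^'n)" by (simp add: vec_eq_iff)

lemma vec_expand: "(x::real^'n) = (\<Sum>i\<in>UNIV. x $ i *\<^sub>R axis i 1)"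
  using basis_expansion[of x] by (simp add: smult_scaleR)

lemma lin_expand: "linear f \<Longrightarrow> f (x::real^'n) = (\<Sum>i\<in>UNIV. x $ i *\<^sub>R f (axis i 1))"
  by (subst vec_expand) (simp add: linear_sum linear_cmul)

lemma solve_smooth_cramer:
  fixes A :: "real^'k^'k" and b :: "real^'k"
  assumes "det A \<noteq> 0" "A *v y = b"
  shows "y = (\<chi> k. det(\<chi> i j. if j=k then b$i else A$i$j) / det A)"
  using cramer[OF assms(1)] assms(2) by blast

context smctx begin

lemma solve_VS:
  fixes A :: "real^'n \<Rightarrow> real^'k^'k" and b y :: "real^'n \<Rightarrow> real^'k"
  assumes A: "\<And>i j. (\<lambda>w. A w $ i $ j) \<in> S" and b: "VS b" and d: "\<And>w. w \<in> U \<Longrightarrow> det (A w) \<noteq> 0"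
    and e: "\<And>w. w \<in> U \<Longrightarrow> A w *v y w = b w"
  shows "VS y"
proof (rule VS_I)
  fix k
  have "(\<lambda>w. det(\<chi> i j. if j=k then b w $i else A w $i$j) / det (A w)) \<in> S"
  proof (intro S_div S_det d)
    fix i j show "(\<lambda>u. (\<chi> i j. if j = k then b u $ i else A u $ i $ j) $ i $ j) \<in> S"
      by (cases "j = k") (simp_all add: A VS_comp[OF b])
  qed (simp add: A)
  then show "(\<lambda>w. y w $ k) \<in> S"
    by (rule S_cong) (use solve_smooth_cramer[OF d e] in simp)
qed

lemma x_hasd: "u \<in> U \<Longrightarrow> (x has_derivative dx x u) (at u)"
  using sx unfolding smooth_on_def dx_def
  by (metis iter_dd.simps(1) frechet_derivative_works)

lemma dx_lin: "u \<in> U \<Longrightarrow> linear (dx x u)"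
  using x_hasd has_derivative_linear by blast

lemma VS_x: "VS x"
  by (rule VS_I) (use S_gen[of "[]"] in simp)

lemma dx_iter: "dx x u Y = iter_dd x [Y] u"
  by (simp add: dx_def)

lemma ddx_iter: "ddx x u X Y = iter_dd x [X, Y] u"
  by (simp add: ddx_def dx_def)

lemma VS_dx: "VS (\<lambda>w. dx x w Y)"
  by (rule VS_I) (use S_gen[of "[Y]"] in \<open>simp add: dx_iter\<close>)

lemma VS_ddx: "VS (\<lambda>w. ddx x w X Y)"
  by (rule VS_I) (use S_gen[of "[X,Y]"] in \<open>simp add: ddx_iter\<close>)

lemma ddx_fd: "ddx x u X Y = frechet_derivative (\<lambda>w. dx x w Y) (at u) X"
  by (simp add: ddx_def)

lemma ddx_sym: "u \<in> U \<Longrightarrow> ddx x u X Y = ddx x u Y X"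
  using VS_schwarz[OF VS_x, of u Y X] by (simp add: ddx_def dx_def)

lemma ddx_lin1: "u \<in> U \<Longrightarrow> linear (\<lambda>X. ddx x u X Y)"
  unfolding ddx_fd using VS_lin[OF VS_dx] by simp

lemma ddx_lin2: "u \<in> U \<Longrightarrow> linear (ddx x u X)"
  unfolding ddx_fd[abs_def] by (rule param_linear[OF VS_dx dx_lin])

end


locale hyp = smctx U x for U :: "(real^'n) set" and x :: "real^'n \<Rightarrow> real^'m" +
  fixes eps :: real
  assumes dim: "CARD('m) = CARD('n) + 1"
    and imm: "\<forall>u\<in>U. inj (dx x u) \<and> x u \<notin> range (dx x u)"
    and epsv: "eps = 1 \<or> eps = -1"
    and posdef: "\<forall>u\<in>U. \<forall>X. X \<noteq> 0 \<longrightarrow> ca_h eps x u X X > 0"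
begin

lemma eps2: "eps * eps = 1" using epsv by auto
lemma eps_nz: "eps \<noteq> 0" using epsv by auto

lemma sc: "c *\<^sub>R ((- eps) *\<^sub>R v) = (- eps * c) *\<^sub>R v" for v :: "real^'m"
  by (simp add: mult.commute)

lemma decomp_unique:
  assumes u: "u \<in> U" and e: "dx x u t1 + c1 *\<^sub>R x u = dx x u t2 + c2 *\<^sub>R x u"
  shows "t1 = t2 \<and> c1 = c2"
proof -
  have l: "linear (dx x u)" by (rule dx_lin[OF u])
  have e2: "(c1 - c2) *\<^sub>R x u = dx x u (t2 - t1)"
    using e by (simp add: linear_diff[OF l] algebra_simps)
  have c: "c1 = c2"
  proof (rule ccontr)
    assume "c1 \<noteq> c2"
    then have "x u = (1 / (c1 - c2)) *\<^sub>R ((c1 - c2) *\<^sub>R x u)" by simp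
    also have "\<dots> = dx x u ((1 / (c1 - c2)) *\<^sub>R (t2 - t1))" unfolding e2 linear_cmul[OF l] ..
    finally have "x u = dx x u ((1 / (c1 - c2)) *\<^sub>R (t2 - t1))" .
    then show False using imm u by auto
  qed
  then have "dx x u t1 = dx x u t2" using e by simp
  then show ?thesis using imm u c unfolding inj_def by blast
qed

definition bt :: "'m \<Rightarrow> 'n option" where "bt = (SOME b. bij b)"

lemma bt_bij: "bij bt"
proof -
  have "\<exists>b::'m \<Rightarrow> 'n option. bij_betw b UNIV UNIV"
    by (rule finite_same_card_bij) (auto simp: dim card_UNIV_option)
  then show ?thesis unfolding bt_def by (metis someI_ex)
qed

definition Mat :: "real^'n \<Rightarrow> real^'m^'m" where
  "Mat w = (\<chi> r j. (case bt j of Some k \<Rightarrow> dx x w (axis k 1) | None \<Rightarrow> x w) $ r)"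

definition enc :: "real^'n \<Rightarrow> real \<Rightarrow> real^'m" where
  "enc t c = (\<chi> j. case bt j of Some k \<Rightarrow> t $ k | None \<Rightarrow> c)"

lemma Mat_enc: assumes u: "u \<in> U" shows "Mat u *v enc t c = dx x u t + c *\<^sub>R x u"
proof -
  have "(Mat u *v enc t c) $ r = (dx x u t + c *\<^sub>R x u) $ r" for r
  proof -
    define g where "g z = (case z of Some k \<Rightarrow> dx x u (axis k 1) $ r * t $ k | None \<Rightarrow> x u $ r * c)" for z
    have "(Mat u *v enc t c) $ r = (\<Sum>j\<in>UNIV. g (bt j))"
      unfolding matrix_vector_mult_def
    proof (simp only: vec_lambda_beta, rule sum.cong[OF refl])
      fix j show "Mat u $ r $ j * enc t c $ j = g (bt j)"
        unfolding Mat_def enc_def by (cases "bt j") (simp_all add: g_def)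
    qed
    also have "\<dots> = (\<Sum>z\<in>UNIV. g z)"
      by (rule sum.reindex_bij_betw) (use bt_bij in \<open>simp add: bij_def bij_betw_def\<close>)
    also have "\<dots> = x u $ r * c + (\<Sum>k\<in>UNIV. dx x u (axis k 1) $ r * t $ k)"
      unfolding sum_option_univ g_def by simp
    also have "\<dots> = (dx x u t + c *\<^sub>R x u) $ r"
      by (subst lin_expand[OF dx_lin[OF u], of t]) (simp add: sum_component algebra_simps)
    finally show ?thesis .
  qed
  then show ?thesis unfolding vec_eq_iff by blast
qed

lemma enc_all: "y = enc (\<chi> k. y $ inv bt (Some k)) (y $ inv bt None)"
proof -
  have ij: "inv bt (bt j) = j" for j using bt_bij by (simp add: bij_def inv_f_f)
  have "y $ j = enc (\<chi> k. y $ inv bt (Some k)) (y $ inv bt None) $ j" for j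
  proof (cases "bt j")
    case None
    then have e: "inv bt None = j" using ij[of j] by simp
    have "enc (\<chi> k. y $ inv bt (Some k)) (y $ inv bt None) $ j = y $ inv bt None"
      unfolding enc_def using None by simp
    then show ?thesis unfolding e by simp
  next
    case (Some k)
    then have e: "inv bt (Some k) = j" using ij[of j] by simp
    have "enc (\<chi> k. y $ inv bt (Some k)) (y $ inv bt None) $ j = y $ inv bt (Some k)"
      unfolding enc_def using Some by simp
    then show ?thesis unfolding e by simp
  qed
  then show ?thesis unfolding vec_eq_iff by blast
qed

lemma enc_nth_some: "enc t c $ inv bt (Some k) = t $ k"
  unfolding enc_def using bt_bij by (simp add: bij_def surj_f_inv_f)
lemma enc_nth_none: "enc t c $ inv bt None = c"
  unfolding enc_def using bt_bij by (simp add: bij_def surj_f_inv_f)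

lemma Mat_det: assumes u: "u \<in> U" shows "det (Mat u) \<noteq> 0"
proof -
  have "inj ((*v) (Mat u))"
  proof (rule linear_injective_0[THEN iffD2, OF matrix_vector_mul_linear], intro allI impI)
    fix y assume y0: "Mat u *v y = 0"
    obtain t c where y: "y = enc t c" using enc_all by blast
    have "dx x u t + c *\<^sub>R x u = dx x u 0 + 0 *\<^sub>R x u"
      using y0 Mat_enc[OF u] y linear_0[OF dx_lin[OF u]] by simp
    from decomp_unique[OF u this] have "t = 0" "c = 0" by auto
    then show "y = 0" using y by (simp add: enc_def vec_eq_iff split: option.splits)
  qed
  then show ?thesis using det_nz_iff_inj[OF matrix_vector_mul_linear, of "Mat u"]
    by (simp add: matrix_of_matrix_vector_mul)
qed

lemma Mat_S: "(\<lambda>w. Mat w $ i $ j) \<in> S"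
proof (cases "bt j")
  case None
  then show ?thesis unfolding Mat_def using VS_comp[OF VS_x] by simp
next
  case (Some k)
  then show ?thesis unfolding Mat_def using VS_comp[OF VS_dx] by simp
qed

lemma decomp_exists: assumes u: "u \<in> U" shows "\<exists>t c. v = dx x u t + c *\<^sub>R x u"
proof -
  have "invertible (Mat u)" using Mat_det[OF u] invertible_det_nz by blast
  then obtain B where "Mat u ** B = mat 1" unfolding invertible_def by blast
  then have "Mat u *v (B *v v) = v" by (simp add: matrix_vector_mul_assoc)
  then show ?thesis using Mat_enc[OF u] enc_all by metis
qed

lemma h_decomp: assumes u: "u \<in> U"
  shows "ddx x u X Y = dx x u (ca_nabla eps x u X Y) + ca_h eps x u X Y *\<^sub>R ((- eps) *\<^sub>R x u)"
proof -
  obtain t c where tc: "ddx x u X Y = dx x u t + c *\<^sub>R x u" using decomp_exists[OF u] by blast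
  have tc': "ddx x u X Y = dx x u t + (- eps * c) *\<^sub>R ((- eps) *\<^sub>R x u)"
    using tc eps2 by simp
  have uq: "\<And>t' c'. ddx x u X Y = dx x u t' + c' *\<^sub>R ((- eps) *\<^sub>R x u) \<Longrightarrow> t' = t \<and> c' = - eps * c"
  proof -
    fix t' c' assume "ddx x u X Y = dx x u t' + c' *\<^sub>R ((- eps) *\<^sub>R x u)"
    then have "dx x u t' + (- eps * c') *\<^sub>R x u = dx x u t + (- eps * (- eps * c)) *\<^sub>R x u"
      using tc' by (simp only: sc)
    from decomp_unique[OF u this] show "t' = t \<and> c' = - eps * c" using epsv by auto
  qed
  have h: "ca_h eps x u X Y = - eps * c"
    unfolding ca_h_def by (rule the_equality) (use tc' uq in blast)+
  have n: "ca_nabla eps x u X Y = t"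
    unfolding ca_nabla_def by (rule the_equality) (use tc' uq in blast)+
  show ?thesis using tc' h n by simp
qed

lemma h_decomp_unique: assumes u: "u \<in> U"
  and "ddx x u X Y = dx x u t + c *\<^sub>R ((- eps) *\<^sub>R x u)"
  shows "ca_nabla eps x u X Y = t \<and> ca_h eps x u X Y = c"
proof -
  have "dx x u (ca_nabla eps x u X Y) + (-eps * ca_h eps x u X Y) *\<^sub>R x u = dx x u t + (-eps * c) *\<^sub>R x u"
    using h_decomp[OF u, of X Y] assms(2) by (simp only: sc)
  from decomp_unique[OF u this] show ?thesis using epsv by auto
qed

lemma VS_nabla_h: "VS (\<lambda>w. enc (ca_nabla eps x w X Y) (- eps * ca_h eps x w X Y))"
  by (rule solve_VS[OF Mat_S VS_ddx[of X Y] Mat_det]) (simp_all add: Mat_enc h_decomp sc)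

lemma VS_nabla: "VS (\<lambda>w. ca_nabla eps x w X Y)"
proof (rule VS_I)
  fix k show "(\<lambda>w. ca_nabla eps x w X Y $ k) \<in> S"
    using VS_comp[OF VS_nabla_h, where k="inv bt (Some k)"] by (simp add: enc_nth_some)
qed

lemma S_h: "(\<lambda>w. ca_h eps x w X Y) \<in> S"
proof -
  have a: "(\<lambda>w. enc (ca_nabla eps x w X Y) (- eps * ca_h eps x w X Y) $ inv bt None) \<in> S"
    by (rule VS_comp[OF VS_nabla_h])
  have b: "(\<lambda>w. (- eps) * (enc (ca_nabla eps x w X Y) (- eps * ca_h eps x w X Y) $ inv bt None)) \<in> S"
    by (rule S_cmul[OF a])
  have c: "\<And>w. (- eps) * (- eps * ca_h eps x w X Y) = ca_h eps x w X Y"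
    using epsv by auto
  show ?thesis by (rule S_cong[OF b]) (simp only: enc_nth_none c)
qed

end


context smctx begin
lemma param_linear_S:
  fixes F :: "real^'n \<Rightarrow> 'a::real_vector \<Rightarrow> real"
  assumes vs: "\<And>a. (\<lambda>w. F w a) \<in> S" and lin: "\<And>w. w \<in> U \<Longrightarrow> linear (F w)" and u: "u \<in> U"
  shows "linear (\<lambda>a. frechet_derivative (\<lambda>w. F w a) (at u) W)"
proof (rule linearI)
  fix a b
  have "frechet_derivative (\<lambda>w. F w (a + b)) (at u) = (\<lambda>v. frechet_derivative (\<lambda>w. F w a) (at u) v + frechet_derivative (\<lambda>w. F w b) (at u) v)"
    by (rule fd_cong_open[OF _ u]) (auto intro!: derivative_eq_intros S_hasd[OF vs u] simp: linear_add[OF lin])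
  then show "frechet_derivative (\<lambda>w. F w (a + b)) (at u) W = frechet_derivative (\<lambda>w. F w a) (at u) W + frechet_derivative (\<lambda>w. F w b) (at u) W"
    by simp
next
  fix c :: real and a
  have "frechet_derivative (\<lambda>w. F w (c *\<^sub>R a)) (at u) = (\<lambda>v. c *\<^sub>R frechet_derivative (\<lambda>w. F w a) (at u) v)"
    by (rule fd_cong_open[OF _ u]) (auto intro!: derivative_eq_intros S_hasd[OF vs u] simp: linear_cmul[OF lin])
  then show "frechet_derivative (\<lambda>w. F w (c *\<^sub>R a)) (at u) W = c *\<^sub>R frechet_derivative (\<lambda>w. F w a) (at u) W"
    by simp
qed

lemma S_fd_cong: "f \<in> S \<Longrightarrow> u \<in> U \<Longrightarrow> (\<And>w. w \<in> U \<Longrightarrow> g w = f w) \<Longrightarrow>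
   frechet_derivative g (at u) = frechet_derivative f (at u)"
  by (rule fd_cong_open[OF S_hasd]) auto
end

context hyp begin

abbreviation "hh u \<equiv> ca_h eps x u"
abbreviation "NN u \<equiv> ca_nabla eps x u"
abbreviation "GG u \<equiv> ca_LC eps x u"
abbreviation "KK u \<equiv> ca_K eps x u"
abbreviation "dh u \<equiv> ca_dh eps x u"

lemma N_h_sym: assumes u: "u \<in> U" shows "NN u X Y = NN u Y X \<and> hh u X Y = hh u Y X"
  using h_decomp_unique[OF u, of X Y] h_decomp[OF u, of Y X] ddx_sym[OF u, of X Y] by metis

lemma N_h_add1: assumes u: "u \<in> U"
  shows "NN u (A + B) Y = NN u A Y + NN u B Y \<and> hh u (A + B) Y = hh u A Y + hh u B Y"
proof (rule h_decomp_unique[OF u])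
  have "ddx x u (A + B) Y = ddx x u A Y + ddx x u B Y" using linear_add[OF ddx_lin1[OF u]] by simp
  also have "\<dots> = dx x u (NN u A Y + NN u B Y) + (hh u A Y + hh u B Y) *\<^sub>R (- eps *\<^sub>R x u)"
    unfolding h_decomp[OF u, of A Y] h_decomp[OF u, of B Y] linear_add[OF dx_lin[OF u]]
    by (simp add: algebra_simps)
  finally show "ddx x u (A + B) Y = dx x u (NN u A Y + NN u B Y) + (hh u A Y + hh u B Y) *\<^sub>R (- eps *\<^sub>R x u)" .
qed

lemma N_h_scale1: assumes u: "u \<in> U"
  shows "NN u (c *\<^sub>R A) Y = c *\<^sub>R NN u A Y \<and> hh u (c *\<^sub>R A) Y = c * hh u A Y"
proof (rule h_decomp_unique[OF u])
  have "ddx x u (c *\<^sub>R A) Y = c *\<^sub>R ddx x u A Y" using linear_cmul[OF ddx_lin1[OF u]] by simp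
  also have "\<dots> = dx x u (c *\<^sub>R NN u A Y) + (c * hh u A Y) *\<^sub>R (- eps *\<^sub>R x u)"
    unfolding h_decomp[OF u, of A Y] linear_cmul[OF dx_lin[OF u]]
    by (simp add: algebra_simps)
  finally show "ddx x u (c *\<^sub>R A) Y = dx x u (c *\<^sub>R NN u A Y) + (c * hh u A Y) *\<^sub>R (- eps *\<^sub>R x u)" .
qed

lemma N_lin1: "u \<in> U \<Longrightarrow> linear (\<lambda>A. NN u A Y)"
  by (rule linearI) (simp_all add: N_h_add1 N_h_scale1)
lemma h_lin1: "u \<in> U \<Longrightarrow> linear (\<lambda>A. hh u A Y)"
  by (rule linearI) (simp_all add: N_h_add1 N_h_scale1)
lemma N_sym: "u \<in> U \<Longrightarrow> NN u X Y = NN u Y X" using N_h_sym by blast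
lemma h_sym: "u \<in> U \<Longrightarrow> hh u X Y = hh u Y X" using N_h_sym by blast
lemma N_lin2: assumes "u \<in> U" shows "linear (NN u X)"
proof -
  have "NN u X = (\<lambda>A. NN u A X)" using N_sym[OF assms] by auto
  then show ?thesis using N_lin1[OF assms] by simp
qed
lemma h_lin2: assumes "u \<in> U" shows "linear (hh u X)"
proof -
  have "hh u X = (\<lambda>A. hh u A X)" using h_sym[OF assms] by auto
  then show ?thesis using h_lin1[OF assms] by simp
qed

lemma dh_def': "dh u Z X Y = frechet_derivative (\<lambda>w. hh w X Y) (at u) Z"
  by (simp add: ca_dh_def)

lemma dh_lin1: "u \<in> U \<Longrightarrow> linear (\<lambda>Z. dh u Z X Y)"
  unfolding dh_def' using S_lin[OF S_h] by simp
lemma dh_lin2: "u \<in> U \<Longrightarrow> linear (\<lambda>X. dh u Z X Y)"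
  unfolding dh_def' by (rule param_linear_S[where F="\<lambda>w X. hh w X Y", OF S_h h_lin1])
lemma dh_lin3: "u \<in> U \<Longrightarrow> linear (\<lambda>Y. dh u Z X Y)"
  unfolding dh_def' by (rule param_linear_S[where F="\<lambda>w Y. hh w X Y", OF S_h h_lin2])
lemma dh_sym: assumes u: "u \<in> U" shows "dh u Z X Y = dh u Z Y X"
  unfolding dh_def' using S_fd_cong[OF S_h u, of "\<lambda>w. hh w Y X" X Y] h_sym by simp

lemma S_dh: "(\<lambda>w. dh w Z X Y) \<in> S"
  unfolding dh_def' by (rule S_d[OF S_h])

definition kz :: "real^'n \<Rightarrow> real^'n \<Rightarrow> real^'n \<Rightarrow> real^'n \<Rightarrow> real" where
  "kz u X Y Z = (dh u X Y Z + dh u Y X Z - dh u Z X Y) / 2"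

lemma kz_lin: assumes u: "u \<in> U" shows "linear (kz u X Y)"
proof (rule linearI)
  fix a b show "kz u X Y (a + b) = kz u X Y a + kz u X Y b"
    unfolding kz_def using linear_add[OF dh_lin1[OF u]] linear_add[OF dh_lin3[OF u]] by (simp add: field_simps)
next
  fix c :: real and a show "kz u X Y (c *\<^sub>R a) = c *\<^sub>R kz u X Y a"
    unfolding kz_def using linear_cmul[OF dh_lin1[OF u]] linear_cmul[OF dh_lin3[OF u]] by (simp add: field_simps)
qed

lemma posdef': "u \<in> U \<Longrightarrow> hh u X X = 0 \<Longrightarrow> X = 0"
  using posdef by force

lemma h_zero_unique: assumes u: "u \<in> U" and "\<And>Z. hh u t1 Z = hh u t2 Z" shows "t1 = t2"
proof -
  have "hh u (t1 - t2) (t1 - t2) = 0"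
    using assms(2)[of "t1 - t2"] linear_diff[OF h_lin1[OF u]] by simp
  then show ?thesis using posdef'[OF u, of "t1 - t2"] by simp
qed

definition Hm :: "real^'n \<Rightarrow> real^'n^'n" where
  "Hm u = (\<chi> i j. hh u (axis j 1) (axis i 1))"

lemma Hm_mult: assumes u: "u \<in> U" shows "(Hm u *v t) $ i = hh u t (axis i 1)"
proof -
  have "(Hm u *v t) $ i = (\<Sum>j\<in>UNIV. t $ j * hh u (axis j 1) (axis i 1))"
    unfolding matrix_vector_mult_def Hm_def by (simp add: mult.commute)
  also have "\<dots> = hh u t (axis i 1)"
    using lin_expand[OF h_lin1[OF u], of t "axis i 1"] by simp
  finally show ?thesis .
qed

lemma Hm_det: assumes u: "u \<in> U" shows "det (Hm u) \<noteq> 0"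
proof -
  have "inj ((*v) (Hm u))"
  proof (rule linear_injective_0[THEN iffD2, OF matrix_vector_mul_linear], intro allI impI)
    fix t assume t0: "Hm u *v t = 0"
    have "\<And>i. hh u t (axis i 1) = 0" using t0 Hm_mult[OF u] by (metis zero_index)
    then have "hh u t t = 0" using lin_expand[OF h_lin2[OF u], of t t] by simp
    then show "t = 0" using posdef'[OF u] by simp
  qed
  then show ?thesis using det_nz_iff_inj[OF matrix_vector_mul_linear, of "Hm u"]
    by (simp add: matrix_of_matrix_vector_mul)
qed

lemma LC_char: assumes u: "u \<in> U"
  shows "\<forall>Z. hh u (GG u X Y) Z = kz u X Y Z"
proof -
  have "invertible (Hm u)" using Hm_det[OF u] invertible_det_nz by blast
  then obtain B where "Hm u ** B = mat 1" unfolding invertible_def by blast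
  then have tb: "Hm u *v (B *v (\<chi> i. kz u X Y (axis i 1))) = (\<chi> i. kz u X Y (axis i 1))"
    by (simp add: matrix_vector_mul_assoc)
  define t where "t = B *v (\<chi> i. kz u X Y (axis i 1))"
  have ti: "hh u t (axis i 1) = kz u X Y (axis i 1)" for i
    using tb Hm_mult[OF u, of t i] unfolding t_def by simp
  have tZ: "hh u t Z = kz u X Y Z" for Z
    using lin_expand[OF h_lin2[OF u], of t Z] lin_expand[OF kz_lin[OF u], of X Y Z] ti by simp
  have "GG u X Y = t"
    unfolding ca_LC_def kz_def[symmetric]
  proof (rule the_equality)
    show "\<forall>Z. hh u t Z = kz u X Y Z" using tZ by blast
  next
    fix t' assume "\<forall>Z. hh u t' Z = kz u X Y Z"
    then show "t' = t" using h_zero_unique[OF u, of t' t] tZ by simp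
  qed
  then show ?thesis using tZ by simp
qed

lemma LC_char': "u \<in> U \<Longrightarrow> hh u (GG u X Y) Z = kz u X Y Z"
  using LC_char by blast

lemma LC_unique: assumes u: "u \<in> U" and "\<And>Z. hh u t Z = kz u X Y Z" shows "GG u X Y = t"
  using h_zero_unique[OF u, of "GG u X Y" t] LC_char[OF u] assms(2) by simp

lemma VS_LC: "VS (\<lambda>w. GG w X Y)"
proof (rule solve_VS[where b="\<lambda>w. \<chi> i. kz w X Y (axis i 1)"])
  show "\<And>i j. (\<lambda>w. Hm w $ i $ j) \<in> S" unfolding Hm_def by (simp add: S_h)
  show "VS (\<lambda>w. \<chi> i. kz w X Y (axis i 1))"
    by (rule VS_I) (simp add: kz_def S_div S_diff S_add S_dh S_cst)
  show "\<And>w. w \<in> U \<Longrightarrow> det (Hm w) \<noteq> 0" by (rule Hm_det)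
  show "\<And>w. w \<in> U \<Longrightarrow> Hm w *v GG w X Y = (\<chi> i. kz w X Y (axis i 1))"
    using Hm_mult LC_char by (simp add: vec_eq_iff)
qed

lemma LC_sym: assumes u: "u \<in> U" shows "GG u X Y = GG u Y X"
proof (rule LC_unique[OF u])
  fix Z show "hh u (GG u Y X) Z = kz u X Y Z"
    using LC_char'[OF u, of Y X Z] dh_sym[OF u] unfolding kz_def by simp
qed

lemma LC_add1: assumes u: "u \<in> U" shows "GG u (A + B) Y = GG u A Y + GG u B Y"
proof (rule LC_unique[OF u])
  fix Z show "hh u (GG u A Y + GG u B Y) Z = kz u (A + B) Y Z"
    using LC_char'[OF u, of A Y Z] LC_char'[OF u, of B Y Z] linear_add[OF h_lin1[OF u]]
      linear_add[OF dh_lin1[OF u]] linear_add[OF dh_lin2[OF u]] unfolding kz_def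
    by (simp add: field_simps)
qed

lemma LC_scale1: assumes u: "u \<in> U" shows "GG u (c *\<^sub>R A) Y = c *\<^sub>R GG u A Y"
proof (rule LC_unique[OF u])
  fix Z show "hh u (c *\<^sub>R GG u A Y) Z = kz u (c *\<^sub>R A) Y Z"
    using LC_char'[OF u, of A Y Z] linear_cmul[OF h_lin1[OF u]]
      linear_cmul[OF dh_lin1[OF u]] linear_cmul[OF dh_lin2[OF u]] unfolding kz_def
    by (simp add: field_simps) (metis distrib_left)
qed

lemma LC_lin1: "u \<in> U \<Longrightarrow> linear (\<lambda>A. GG u A Y)"
  by (rule linearI) (simp_all add: LC_add1 LC_scale1)
lemma LC_lin2: assumes "u \<in> U" shows "linear (GG u X)"
proof -
  have "GG u X = (\<lambda>A. GG u A X)" using LC_sym[OF assms] by auto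
  then show ?thesis using LC_lin1[OF assms] by simp
qed

lemma K_def': "KK u X Y = NN u X Y - GG u X Y" by (simp add: ca_K_def)
lemma VS_K: "VS (\<lambda>w. KK w X Y)" unfolding K_def' by (intro VS_diff VS_nabla VS_LC)
lemma K_sym: "u \<in> U \<Longrightarrow> KK u X Y = KK u Y X" unfolding K_def' using N_sym LC_sym by metis
lemma K_lin1: "u \<in> U \<Longrightarrow> linear (\<lambda>A. KK u A Y)"
  unfolding K_def' by (intro linear_compose_sub N_lin1 LC_lin1)
lemma K_lin2: "u \<in> U \<Longrightarrow> linear (KK u X)"
  unfolding K_def'[abs_def] by (intro linear_compose_sub N_lin2 LC_lin2)

lemma metric_compat: assumes u: "u \<in> U"
  shows "dh u W X Y = hh u (GG u W X) Y + hh u X (GG u W Y)"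
proof -
  have "hh u X (GG u W Y) = hh u (GG u W Y) X" using h_sym[OF u] by simp
  then show ?thesis using LC_char'[OF u, of W X Y] LC_char'[OF u, of W Y X] dh_sym[OF u, of W X Y]
      dh_sym[OF u, of X W Y] dh_sym[OF u, of Y W X] unfolding kz_def by simp
qed

end


lemma lin_expand_gen: "linear f \<Longrightarrow> f (x::real^'n) = (\<Sum>i\<in>UNIV. x $ i *\<^sub>R f (axis i 1))"
  by (subst vec_expand) (simp add: linear_sum linear_cmul)

lemma bil_expand:
  fixes F :: "real^'n \<Rightarrow> real^'n \<Rightarrow> 'b::real_vector"
  assumes l1: "\<And>b. linear (\<lambda>a. F a b)" and l2: "\<And>a. linear (F a)"
  shows "F a b = (\<Sum>i\<in>UNIV. \<Sum>j\<in>UNIV. (a $ i * b $ j) *\<^sub>R F (axis i 1) (axis j 1))"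
proof -
  have "F a b = (\<Sum>i\<in>UNIV. a $ i *\<^sub>R F (axis i 1) b)"
    using lin_expand_gen[OF l1[of b], of a] by simp
  also have "\<dots> = (\<Sum>i\<in>UNIV. a $ i *\<^sub>R (\<Sum>j\<in>UNIV. b $ j *\<^sub>R F (axis i 1) (axis j 1)))"
    by (rule sum.cong[OF refl]) (subst lin_expand_gen[OF l2, of _ b], rule refl)
  also have "\<dots> = (\<Sum>i\<in>UNIV. \<Sum>j\<in>UNIV. (a $ i * b $ j) *\<^sub>R F (axis i 1) (axis j 1))"
    by (simp add: scaleR_sum_right)
  finally show ?thesis .
qed

context smctx begin

lemma bil_deriv:
  fixes B :: "real^'n \<Rightarrow> real^'n \<Rightarrow> real^'n \<Rightarrow> real^'k"
  assumes vsB: "\<And>a b. VS (\<lambda>w. B w a b)"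
    and l1: "\<And>w b. w \<in> U \<Longrightarrow> linear (\<lambda>a. B w a b)" and l2: "\<And>w a. w \<in> U \<Longrightarrow> linear (B w a)"
    and A: "VS A" and C: "VS C" and u: "u \<in> U"
  shows "VS (\<lambda>w. B w (A w) (C w))"
    "frechet_derivative (\<lambda>w. B w (A w) (C w)) (at u) W =
       frechet_derivative (\<lambda>w. B w (A u) (C u)) (at u) W
       + B u (frechet_derivative A (at u) W) (C u) + B u (A u) (frechet_derivative C (at u) W)"
proof -
  let ?e = "\<lambda>i. axis i (1::real)"
  define E where "E w = (\<Sum>i\<in>UNIV. \<Sum>j\<in>UNIV. (A w $ i * C w $ j) *\<^sub>R B w (?e i) (?e j))" for w
  have EB: "\<And>w. w \<in> U \<Longrightarrow> B w (A w) (C w) = E w"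
    unfolding E_def by (rule bil_expand[OF l1 l2])
  have vsE: "VS E" unfolding E_def
    by (intro VS_sum VS_scale S_mul VS_comp A C vsB) auto
  show "VS (\<lambda>w. B w (A w) (C w))" by (rule VS_cong[OF vsE EB])
  define DA where "DA i = frechet_derivative (\<lambda>w. A w $ i) (at u)" for i
  define DC where "DC j = frechet_derivative (\<lambda>w. C w $ j) (at u)" for j
  define DB where "DB i j = frechet_derivative (\<lambda>w. B w (?e i) (?e j)) (at u)" for i j
  have hd: "(E has_derivative (\<lambda>h. \<Sum>i\<in>UNIV. \<Sum>j\<in>UNIV.
      (A u $ i * C u $ j) *\<^sub>R DB i j h + (A u $ i * DC j h + DA i h * C u $ j) *\<^sub>R B u (?e i) (?e j))) (at u)"
    unfolding E_def DA_def DB_def DC_def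
    by (intro has_derivative_sum has_derivative_scaleR has_derivative_mult S_hasd VS_comp A C u VS_hasd' vsB)
  have fdB: "frechet_derivative (\<lambda>w. B w (A w) (C w)) (at u) W = (\<Sum>i\<in>UNIV. \<Sum>j\<in>UNIV.
      (A u $ i * C u $ j) *\<^sub>R DB i j W + (A u $ i * DC j W + DA i W * C u $ j) *\<^sub>R B u (?e i) (?e j))"
    using fd_cong_open[OF hd u EB] by simp
  have lDB1: "linear (\<lambda>a. frechet_derivative (\<lambda>w. B w a b) (at u) W)" for b
    by (rule param_linear[where F="\<lambda>w a. B w a b", OF vsB l1 u])
  have lDB2: "linear (\<lambda>b. frechet_derivative (\<lambda>w. B w a b) (at u) W)" for a
    by (rule param_linear[where F="\<lambda>w b. B w a b", OF vsB l2 u])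
  have r1: "frechet_derivative (\<lambda>w. B w (A u) (C u)) (at u) W = (\<Sum>i\<in>UNIV. \<Sum>j\<in>UNIV. (A u $ i * C u $ j) *\<^sub>R DB i j W)"
    unfolding DB_def by (rule bil_expand[where F="\<lambda>a b. frechet_derivative (\<lambda>w. B w a b) (at u) W", OF lDB1 lDB2])
  have nA: "frechet_derivative A (at u) W $ i = DA i W" for i unfolding DA_def by (rule VS_nth[OF A u])
  have nC: "frechet_derivative C (at u) W $ j = DC j W" for j unfolding DC_def by (rule VS_nth[OF C u])
  have r2: "B u (frechet_derivative A (at u) W) (C u) = (\<Sum>i\<in>UNIV. \<Sum>j\<in>UNIV. (DA i W * C u $ j) *\<^sub>R B u (?e i) (?e j))"
    unfolding bil_expand[where F="B u", OF l1[OF u] l2[OF u], of "frechet_derivative A (at u) W" "C u"] nA ..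
  have r3: "B u (A u) (frechet_derivative C (at u) W) = (\<Sum>i\<in>UNIV. \<Sum>j\<in>UNIV. (A u $ i * DC j W) *\<^sub>R B u (?e i) (?e j))"
    unfolding bil_expand[where F="B u", OF l1[OF u] l2[OF u], of "A u" "frechet_derivative C (at u) W"] nC ..
  show "frechet_derivative (\<lambda>w. B w (A w) (C w)) (at u) W =
       frechet_derivative (\<lambda>w. B w (A u) (C u)) (at u) W
       + B u (frechet_derivative A (at u) W) (C u) + B u (A u) (frechet_derivative C (at u) W)"
    unfolding fdB r1 r2 r3 by (simp add: sum.distrib scaleR_add_left algebra_simps)
qed

end


lemma ricci_alg:
  fixes G K :: "'v::real_vector \<Rightarrow> 'v \<Rightarrow> 'v" and dG dK :: "'v \<Rightarrow> 'v \<Rightarrow> 'v \<Rightarrow> 'v"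
    and ddK :: "'v \<Rightarrow> 'v \<Rightarrow> 'v \<Rightarrow> 'v \<Rightarrow> 'v" and CK :: "'v \<Rightarrow> 'v \<Rightarrow> 'v \<Rightarrow> 'v"
    and dCK :: "'v \<Rightarrow> 'v \<Rightarrow> 'v \<Rightarrow> 'v \<Rightarrow> 'v"
  assumes G2: "\<And>A. linear (G A)" and K1: "\<And>B. linear (\<lambda>A. K A B)" and K2: "\<And>A. linear (K A)"
    and sym: "ddK W Z X Y = ddK Z W X Y"
    and CK: "\<And>A X Y. CK A X Y = dK A X Y + G A (K X Y) - K (G A X) Y - K X (G A Y)"
    and dCK: "\<And>W Z X Y. dCK W Z X Y = ddK W Z X Y + dG W Z (K X Y) + G Z (dK W X Y) - dK W (G Z X) Y - K (dG W Z X) Y - dK W X (G Z Y) - K X (dG W Z Y)"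
  shows "dCK W Z X Y - dCK Z W X Y + G W (CK Z X Y) - G Z (CK W X Y) - CK Z (G W X) Y + CK W (G Z X) Y - CK Z X (G W Y) + CK W X (G Z Y)
    = (dG W Z (K X Y) - dG Z W (K X Y) + G W (G Z (K X Y)) - G Z (G W (K X Y)))
      - K (dG W Z X - dG Z W X + G W (G Z X) - G Z (G W X)) Y
      - K X (dG W Z Y - dG Z W Y + G W (G Z Y) - G Z (G W Y))"
proof -
  have a1: "K (a + b) B = K a B + K b B" "K (a - b) B = K a B - K b B" for a b B
    using linear_add[OF K1[of B]] linear_diff[OF K1[of B]] by auto
  have a2: "K B (a + b) = K B a + K B b" "K B (a - b) = K B a - K B b" for a b B
    using linear_add[OF K2[of B]] linear_diff[OF K2[of B]] by auto
  have a3: "G B (a + b) = G B a + G B b" "G B (a - b) = G B a - G B b" for a b B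
    using linear_add[OF G2[of B]] linear_diff[OF G2[of B]] by auto
  show ?thesis unfolding CK dCK
    by (simp add: a1 a2 a3 sym algebra_simps)
qed

lemma mu_alg:
  fixes G :: "'v::real_vector \<Rightarrow> 'v \<Rightarrow> 'v" and h :: "'v \<Rightarrow> 'v \<Rightarrow> real" and dh :: "'v \<Rightarrow> 'v \<Rightarrow> 'v \<Rightarrow> real"
    and CK :: "'v \<Rightarrow> 'v \<Rightarrow> 'v \<Rightarrow> 'v" and dCK :: "'v \<Rightarrow> 'v \<Rightarrow> 'v \<Rightarrow> 'v \<Rightarrow> 'v" and dmu :: "'v \<Rightarrow> real"
  assumes G2: "\<And>A. linear (G A)" and Gs: "\<And>A B. G A B = G B A"
    and h1: "\<And>B. linear (\<lambda>A. h A B)" and hs: "\<And>A B. h A B = h B A"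
    and dh: "\<And>W X Y. dh W X Y = h (G W X) Y + h X (G W Y)"
    and CK: "\<And>A X Y. CK A X Y = mu *\<^sub>R (h X Y *\<^sub>R A + h X A *\<^sub>R Y + h Y A *\<^sub>R X)"
    and dCK: "\<And>W Z X Y. dCK W Z X Y = dmu W *\<^sub>R (h X Y *\<^sub>R Z + h X Z *\<^sub>R Y + h Y Z *\<^sub>R X)
        + mu *\<^sub>R (dh W X Y *\<^sub>R Z + dh W X Z *\<^sub>R Y + dh W Y Z *\<^sub>R X)"
  shows "dCK W Z X Y - dCK Z W X Y + G W (CK Z X Y) - G Z (CK W X Y) - CK Z (G W X) Y + CK W (G Z X) Y - CK Z X (G W Y) + CK W X (G Z Y)
    = dmu W *\<^sub>R (h X Y *\<^sub>R Z + h X Z *\<^sub>R Y + h Y Z *\<^sub>R X) - dmu Z *\<^sub>R (h X Y *\<^sub>R W + h X W *\<^sub>R Y + h Y W *\<^sub>R X)"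
proof -
  have a3: "G B (a + b) = G B a + G B b" "G B (c *\<^sub>R a) = c *\<^sub>R G B a" for a b B c
    using linear_add[OF G2[of B]] linear_cmul[OF G2[of B]] by auto
  have hs2: "h A (G B C) = h (G B C) A" for A B C by (rule hs)
  have gs: "G Z W = G W Z" by (rule Gs)
  show ?thesis unfolding CK dCK dh
    by (simp add: a3 hs2 gs algebra_simps)
qed

lemma gauss_alg:
  fixes G K N :: "'v::real_vector \<Rightarrow> 'v \<Rightarrow> 'v" and dG dK dN R :: "'v \<Rightarrow> 'v \<Rightarrow> 'v \<Rightarrow> 'v"
    and CK :: "'v \<Rightarrow> 'v \<Rightarrow> 'v \<Rightarrow> 'v"
  assumes G2: "\<And>A. linear (G A)" and K2: "\<And>A. linear (K A)" and Gs: "\<And>A B. G A B = G B A"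
    and N: "\<And>A B. N A B = G A B + K A B" and dN: "\<And>W A B. dN W A B = dG W A B + dK W A B"
    and CK: "\<And>A X Y. CK A X Y = dK A X Y + G A (K X Y) - K (G A X) Y - K X (G A Y)"
    and CKs: "CK W Z V = CK Z W V"
    and gauss: "dN W Z V - dN Z W V + N W (N Z V) - N Z (N W V) = R W Z V"
  shows "dG W Z V - dG Z W V + G W (G Z V) - G Z (G W V) = R W Z V - K W (K Z V) + K Z (K W V)"
proof -
  have a2: "K B (a + b) = K B a + K B b" for a b B
    using linear_add[OF K2[of B]] by auto
  have a3: "G B (a + b) = G B a + G B b" for a b B
    using linear_add[OF G2[of B]] by auto
  have gs: "G Z W = G W Z" by (rule Gs)
  have c: "dK W Z V + G W (K Z V) - K (G W Z) V - K Z (G W V) = dK Z W V + G Z (K W V) - K (G Z W) V - K W (G Z V)"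
    using CKs unfolding CK .
  define L where "L = dN W Z V - dN Z W V + N W (N Z V) - N Z (N W V) - R W Z V"
  define M where "M = (dK W Z V + G W (K Z V) - K (G W Z) V - K Z (G W V)) - (dK Z W V + G Z (K W V) - K (G Z W) V - K W (G Z V))"
  have L0: "L = 0" unfolding L_def using gauss by simp
  have M0: "M = 0" unfolding M_def using c by simp
  have "(dG W Z V - dG Z W V + G W (G Z V) - G Z (G W V)) - (R W Z V - K W (K Z V) + K Z (K W V)) = L - M"
    unfolding L_def M_def N dN by (simp add: a2 a3 gs algebra_simps)
  then show ?thesis using L0 M0 by simp
qed


context smctx begin

lemma fd_const: "frechet_derivative (\<lambda>w. c) (at u) = (\<lambda>v. 0)"
  by (rule fd_eq) simp

lemma lin_deriv:
  fixes L :: "real^'n \<Rightarrow> real^'n \<Rightarrow> real^'k"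
  assumes vsL: "\<And>a. VS (\<lambda>w. L w a)" and l: "\<And>w. w \<in> U \<Longrightarrow> linear (L w)"
    and A: "VS A" and u: "u \<in> U"
  shows "VS (\<lambda>w. L w (A w))"
    "frechet_derivative (\<lambda>w. L w (A w)) (at u) W =
       frechet_derivative (\<lambda>w. L w (A u)) (at u) W + L u (frechet_derivative A (at u) W)"
proof -
  let ?e = "\<lambda>i. axis i (1::real)"
  define E where "E w = (\<Sum>i\<in>UNIV. A w $ i *\<^sub>R L w (?e i))" for w
  have EL: "\<And>w. w \<in> U \<Longrightarrow> L w (A w) = E w"
    unfolding E_def by (rule lin_expand_gen[OF l])
  have vsE: "VS E" unfolding E_def
    by (intro VS_sum VS_scale VS_comp A vsL) auto
  show "VS (\<lambda>w. L w (A w))" by (rule VS_cong[OF vsE EL])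
  define DA where "DA i = frechet_derivative (\<lambda>w. A w $ i) (at u)" for i
  define DL where "DL i = frechet_derivative (\<lambda>w. L w (?e i)) (at u)" for i
  have hd: "(E has_derivative (\<lambda>h. \<Sum>i\<in>UNIV. A u $ i *\<^sub>R DL i h + DA i h *\<^sub>R L u (?e i))) (at u)"
    unfolding E_def DA_def DL_def
    by (intro has_derivative_sum has_derivative_scaleR S_hasd VS_comp A u VS_hasd' vsL)
  have fdL: "frechet_derivative (\<lambda>w. L w (A w)) (at u) W = (\<Sum>i\<in>UNIV. A u $ i *\<^sub>R DL i W + DA i W *\<^sub>R L u (?e i))"
    using fd_cong_open[OF hd u EL] by simp
  have lDL: "linear (\<lambda>a. frechet_derivative (\<lambda>w. L w a) (at u) W)"
    by (rule param_linear[OF vsL l u])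
  have r1: "frechet_derivative (\<lambda>w. L w (A u)) (at u) W = (\<Sum>i\<in>UNIV. A u $ i *\<^sub>R DL i W)"
    unfolding DL_def by (rule lin_expand_gen[OF lDL])
  have nA: "frechet_derivative A (at u) W $ i = DA i W" for i unfolding DA_def by (rule VS_nth[OF A u])
  have r2: "L u (frechet_derivative A (at u) W) = (\<Sum>i\<in>UNIV. DA i W *\<^sub>R L u (?e i))"
    unfolding lin_expand_gen[OF l[OF u], of "frechet_derivative A (at u) W"] nA ..
  show "frechet_derivative (\<lambda>w. L w (A w)) (at u) W =
       frechet_derivative (\<lambda>w. L w (A u)) (at u) W + L u (frechet_derivative A (at u) W)"
    unfolding fdL r1 r2 by (simp add: sum.distrib)
qed

end

context hyp begin

lemma gauss:
  assumes p: "p \<in> U"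
  shows "frechet_derivative (\<lambda>w. NN w X Y) (at p) W - frechet_derivative (\<lambda>w. NN w W Y) (at p) X
    + NN p W (NN p X Y) - NN p X (NN p W Y) = eps *\<^sub>R (hh p X Y *\<^sub>R W - hh p W Y *\<^sub>R X)"
proof -
  define dN where "dN W X Y = frechet_derivative (\<lambda>w. NN w X Y) (at p) W" for W X Y
  have D3: "frechet_derivative (\<lambda>w. ddx x w X Y) (at p) W =
      dx x p (NN p W (NN p X Y) + dN W X Y + (- eps * hh p X Y) *\<^sub>R W)
      + (- eps * hh p W (NN p X Y) + - eps * dh p W X Y) *\<^sub>R x p" for W X Y
  proof -
    have eqU: "\<And>w. w \<in> U \<Longrightarrow> ddx x w X Y = dx x w (NN w X Y) + (- eps * hh w X Y) *\<^sub>R x w"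
      using h_decomp by (simp add: sc)
    have t1: "((\<lambda>w. dx x w (NN w X Y)) has_derivative frechet_derivative (\<lambda>w. dx x w (NN w X Y)) (at p)) (at p)"
      by (rule VS_hasd'[OF lin_deriv(1)[where L="\<lambda>w a. dx x w a" and A="\<lambda>w. NN w X Y", OF VS_dx dx_lin VS_nabla p] p])
    have t1v: "frechet_derivative (\<lambda>w. dx x w (NN w X Y)) (at p) W = ddx x p W (NN p X Y) + dx x p (dN W X Y)"
    proof -
      have e: "frechet_derivative (\<lambda>w. dx x w (NN w X Y)) (at p) W = frechet_derivative (\<lambda>w. dx x w (NN p X Y)) (at p) W
        + dx x p (frechet_derivative (\<lambda>w. NN w X Y) (at p) W)"
        by (rule lin_deriv(2)[where L="\<lambda>w a. dx x w a" and A="\<lambda>w. NN w X Y", OF VS_dx dx_lin VS_nabla p])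
      show ?thesis unfolding e dN_def ddx_fd ..
    qed
    have t2: "((\<lambda>w. (- eps * hh w X Y) *\<^sub>R x w) has_derivative
       (\<lambda>v. (- eps * hh p X Y) *\<^sub>R dx x p v + (- eps * frechet_derivative (\<lambda>w. hh w X Y) (at p) v) *\<^sub>R x p)) (at p)"
      by (intro has_derivative_scaleR has_derivative_mult_right S_hasd[OF S_h p] x_hasd[OF p])
    have "frechet_derivative (\<lambda>w. ddx x w X Y) (at p) = (\<lambda>v. frechet_derivative (\<lambda>w. dx x w (NN w X Y)) (at p) v +
        ((- eps * hh p X Y) *\<^sub>R dx x p v + (- eps * frechet_derivative (\<lambda>w. hh w X Y) (at p) v) *\<^sub>R x p))"
      by (rule fd_cong_open[OF has_derivative_add[OF t1 t2] p eqU])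
    then have "frechet_derivative (\<lambda>w. ddx x w X Y) (at p) W = ddx x p W (NN p X Y) + dx x p (dN W X Y)
       + (- eps * hh p X Y) *\<^sub>R dx x p W + (- eps * dh p W X Y) *\<^sub>R x p"
      using t1v by (simp add: dh_def')
    also have "\<dots> = dx x p (NN p W (NN p X Y)) + (- eps * hh p W (NN p X Y)) *\<^sub>R x p + dx x p (dN W X Y)
       + (- eps * hh p X Y) *\<^sub>R dx x p W + (- eps * dh p W X Y) *\<^sub>R x p"
      using h_decomp[OF p, of W "NN p X Y"] by (simp add: sc)
    also have "\<dots> = dx x p (NN p W (NN p X Y) + dN W X Y + (- eps * hh p X Y) *\<^sub>R W)
      + (- eps * hh p W (NN p X Y) + - eps * dh p W X Y) *\<^sub>R x p"
      by (simp add: linear_add[OF dx_lin[OF p]] linear_diff[OF dx_lin[OF p]] linear_cmul[OF dx_lin[OF p]] scaleR_add_left algebra_simps)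
    finally show ?thesis .
  qed
  have sw: "frechet_derivative (\<lambda>w. ddx x w X Y) (at p) W = frechet_derivative (\<lambda>w. ddx x w W Y) (at p) X"
    unfolding ddx_fd using VS_schwarz[OF VS_dx[of Y] p, of X W] by simp
  have "NN p W (NN p X Y) + dN W X Y + (- eps * hh p X Y) *\<^sub>R W = NN p X (NN p W Y) + dN X W Y + (- eps * hh p W Y) *\<^sub>R X"
  proof -
    have eq: "dx x p (NN p W (NN p X Y) + dN W X Y + (- eps * hh p X Y) *\<^sub>R W)
      + (- eps * hh p W (NN p X Y) + - eps * dh p W X Y) *\<^sub>R x p =
      dx x p (NN p X (NN p W Y) + dN X W Y + (- eps * hh p W Y) *\<^sub>R X)
      + (- eps * hh p X (NN p W Y) + - eps * dh p X W Y) *\<^sub>R x p"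
      using sw[unfolded D3[of X Y W] D3[of W Y X]] .
    show ?thesis using decomp_unique[OF p eq] by (rule conjunct1)
  qed
  then show ?thesis unfolding dN_def[symmetric] by (simp add: algebra_simps)
qed

end


context hyp begin

lemma dCK_formula:
  assumes p: "p \<in> U"
  shows "frechet_derivative (\<lambda>w. ca_covK eps x w Z X Y) (at p) W =
    frechet_derivative (\<lambda>w. frechet_derivative (\<lambda>w'. KK w' X Y) (at w) Z) (at p) W
    + frechet_derivative (\<lambda>w. GG w Z (KK p X Y)) (at p) W + GG p Z (frechet_derivative (\<lambda>w. KK w X Y) (at p) W)
    - frechet_derivative (\<lambda>w. KK w (GG p Z X) Y) (at p) W - KK p (frechet_derivative (\<lambda>w. GG w Z X) (at p) W) Y
    - frechet_derivative (\<lambda>w. KK w X (GG p Z Y)) (at p) W - KK p X (frechet_derivative (\<lambda>w. GG w Z Y) (at p) W)"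
proof -
  define T1 where "T1 w = frechet_derivative (\<lambda>w'. KK w' X Y) (at w) Z" for w
  define T2 where "T2 w = GG w Z (KK w X Y)" for w
  define T3 where "T3 w = KK w (GG w Z X) Y" for w
  define T4 where "T4 w = KK w X (GG w Z Y)" for w
  have CKe: "(\<lambda>w. ca_covK eps x w Z X Y) = (\<lambda>w. T1 w + T2 w - T3 w - T4 w)"
    unfolding T1_def T2_def T3_def T4_def ca_covK_def ca_K_def[symmetric] by simp
  have v1: "VS T1" unfolding T1_def by (rule VS_d[OF VS_K])
  have v2: "VS T2" unfolding T2_def
    by (rule bil_deriv(1)[where B="\<lambda>w a b. GG w a b" and A="\<lambda>w. Z" and C="\<lambda>w. KK w X Y", OF VS_LC LC_lin1 LC_lin2 VS_const VS_K p])
  have v3: "VS T3" unfolding T3_def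
    by (rule bil_deriv(1)[where B="\<lambda>w a b. KK w a b" and A="\<lambda>w. GG w Z X" and C="\<lambda>w. Y", OF VS_K K_lin1 K_lin2 VS_LC VS_const p])
  have v4: "VS T4" unfolding T4_def
    by (rule bil_deriv(1)[where B="\<lambda>w a b. KK w a b" and A="\<lambda>w. X" and C="\<lambda>w. GG w Z Y", OF VS_K K_lin1 K_lin2 VS_const VS_LC p])
  have d2: "frechet_derivative T2 (at p) W = frechet_derivative (\<lambda>w. GG w Z (KK p X Y)) (at p) W + GG p Z (frechet_derivative (\<lambda>w. KK w X Y) (at p) W)"
  proof -
    have "frechet_derivative T2 (at p) W = frechet_derivative (\<lambda>w. GG w Z (KK p X Y)) (at p) W
       + GG p (frechet_derivative (\<lambda>w. Z) (at p) W) (KK p X Y) + GG p Z (frechet_derivative (\<lambda>w. KK w X Y) (at p) W)"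
      unfolding T2_def
      by (rule bil_deriv(2)[where B="\<lambda>w a b. GG w a b" and A="\<lambda>w. Z" and C="\<lambda>w. KK w X Y", OF VS_LC LC_lin1 LC_lin2 VS_const VS_K p])
    then show ?thesis using linear_0[OF LC_lin1[OF p]] by (simp add: fd_const)
  qed
  have d3: "frechet_derivative T3 (at p) W = frechet_derivative (\<lambda>w. KK w (GG p Z X) Y) (at p) W + KK p (frechet_derivative (\<lambda>w. GG w Z X) (at p) W) Y"
  proof -
    have "frechet_derivative T3 (at p) W = frechet_derivative (\<lambda>w. KK w (GG p Z X) Y) (at p) W
       + KK p (frechet_derivative (\<lambda>w. GG w Z X) (at p) W) Y + KK p (GG p Z X) (frechet_derivative (\<lambda>w. Y) (at p) W)"
      unfolding T3_def
      by (rule bil_deriv(2)[where B="\<lambda>w a b. KK w a b" and A="\<lambda>w. GG w Z X" and C="\<lambda>w. Y", OF VS_K K_lin1 K_lin2 VS_LC VS_const p])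
    then show ?thesis using linear_0[OF K_lin2[OF p]] by (simp add: fd_const)
  qed
  have d4: "frechet_derivative T4 (at p) W = frechet_derivative (\<lambda>w. KK w X (GG p Z Y)) (at p) W + KK p X (frechet_derivative (\<lambda>w. GG w Z Y) (at p) W)"
  proof -
    have "frechet_derivative T4 (at p) W = frechet_derivative (\<lambda>w. KK w X (GG p Z Y)) (at p) W
       + KK p (frechet_derivative (\<lambda>w. X) (at p) W) (GG p Z Y) + KK p X (frechet_derivative (\<lambda>w. GG w Z Y) (at p) W)"
      unfolding T4_def
      by (rule bil_deriv(2)[where B="\<lambda>w a b. KK w a b" and A="\<lambda>w. X" and C="\<lambda>w. GG w Z Y", OF VS_K K_lin1 K_lin2 VS_const VS_LC p])
    then show ?thesis using linear_0[OF K_lin1[OF p]] by (simp add: fd_const)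
  qed
  have hd: "((\<lambda>w. T1 w + T2 w - T3 w - T4 w) has_derivative
     (\<lambda>v. frechet_derivative T1 (at p) v + frechet_derivative T2 (at p) v - frechet_derivative T3 (at p) v - frechet_derivative T4 (at p) v)) (at p)"
    by (intro has_derivative_diff has_derivative_add VS_hasd'[OF v1 p] VS_hasd'[OF v2 p] VS_hasd'[OF v3 p] VS_hasd'[OF v4 p])
  have "frechet_derivative (\<lambda>w. ca_covK eps x w Z X Y) (at p) W =
     frechet_derivative T1 (at p) W + frechet_derivative T2 (at p) W - frechet_derivative T3 (at p) W - frechet_derivative T4 (at p) W"
    unfolding CKe fd_eq[OF hd] by simp
  then show ?thesis unfolding d2 d3 d4 T1_def by (simp add: algebra_simps)
qed


lemma dCK_mu:
  assumes p: "p \<in> U" and mud: "(\<mu> has_derivative dmu) (at p)"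
    and cov: "\<forall>u\<in>U. \<forall>X Y Z. ca_covK eps x u Z X Y =
              \<mu> u *\<^sub>R (hh u X Y *\<^sub>R Z + hh u X Z *\<^sub>R Y + hh u Y Z *\<^sub>R X)"
  shows "frechet_derivative (\<lambda>w. ca_covK eps x w Z X Y) (at p) W =
    dmu W *\<^sub>R (hh p X Y *\<^sub>R Z + hh p X Z *\<^sub>R Y + hh p Y Z *\<^sub>R X)
    + \<mu> p *\<^sub>R (dh p W X Y *\<^sub>R Z + dh p W X Z *\<^sub>R Y + dh p W Y Z *\<^sub>R X)"
proof -
  have a: "((\<lambda>w. hh w A B *\<^sub>R C) has_derivative (\<lambda>v. dh p v A B *\<^sub>R C)) (at p)" for A B C
    unfolding dh_def' using has_derivative_scaleR[OF S_hasd[OF S_h p, of A B] has_derivative_const[of C]] by simp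
  have b: "((\<lambda>w. hh w X Y *\<^sub>R Z + hh w X Z *\<^sub>R Y + hh w Y Z *\<^sub>R X) has_derivative
     (\<lambda>v. dh p v X Y *\<^sub>R Z + dh p v X Z *\<^sub>R Y + dh p v Y Z *\<^sub>R X)) (at p)"
    by (intro has_derivative_add a)
  have c: "((\<lambda>w. \<mu> w *\<^sub>R (hh w X Y *\<^sub>R Z + hh w X Z *\<^sub>R Y + hh w Y Z *\<^sub>R X)) has_derivative
     (\<lambda>v. \<mu> p *\<^sub>R (dh p v X Y *\<^sub>R Z + dh p v X Z *\<^sub>R Y + dh p v Y Z *\<^sub>R X)
        + dmu v *\<^sub>R (hh p X Y *\<^sub>R Z + hh p X Z *\<^sub>R Y + hh p Y Z *\<^sub>R X))) (at p)"
    by (rule has_derivative_scaleR[OF mud b])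
  have "frechet_derivative (\<lambda>w. ca_covK eps x w Z X Y) (at p) = 
     (\<lambda>v. \<mu> p *\<^sub>R (dh p v X Y *\<^sub>R Z + dh p v X Z *\<^sub>R Y + dh p v Y Z *\<^sub>R X)
        + dmu v *\<^sub>R (hh p X Y *\<^sub>R Z + hh p X Z *\<^sub>R Y + hh p Y Z *\<^sub>R X))"
    by (rule fd_cong_open[OF c p]) (use cov in auto)
  then show ?thesis by (simp add: algebra_simps)
qed

lemma key:
  assumes p: "p \<in> U" and mud: "(\<mu> has_derivative dmu) (at p)"
    and cov: "\<forall>u\<in>U. \<forall>X Y Z. ca_covK eps x u Z X Y =
              \<mu> u *\<^sub>R (hh u X Y *\<^sub>R Z + hh u X Z *\<^sub>R Y + hh u Y Z *\<^sub>R X)"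
  defines "Rh \<equiv> \<lambda>W Z V. eps *\<^sub>R (hh p Z V *\<^sub>R W - hh p W V *\<^sub>R Z) - KK p W (KK p Z V) + KK p Z (KK p W V)"
  shows "dmu W *\<^sub>R (hh p X Y *\<^sub>R Z + hh p X Z *\<^sub>R Y + hh p Y Z *\<^sub>R X)
       - dmu Z *\<^sub>R (hh p X Y *\<^sub>R W + hh p X W *\<^sub>R Y + hh p Y W *\<^sub>R X)
     = Rh W Z (KK p X Y) - KK p (Rh W Z X) Y - KK p X (Rh W Z Y)"
proof -
  define dG where "dG W A B = frechet_derivative (\<lambda>w. GG w A B) (at p) W" for W A B
  define dK where "dK W A B = frechet_derivative (\<lambda>w. KK w A B) (at p) W" for W A B
  define dN where "dN W A B = frechet_derivative (\<lambda>w. NN w A B) (at p) W" for W A B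
  define ddK where "ddK W Z X Y = frechet_derivative (\<lambda>w. frechet_derivative (\<lambda>w'. KK w' X Y) (at w) Z) (at p) W" for W Z X Y
  define CK where "CK A X Y = ca_covK eps x p A X Y" for A X Y
  define dCK where "dCK W Z X Y = frechet_derivative (\<lambda>w. ca_covK eps x w Z X Y) (at p) W" for W Z X Y
  define Rhat where "Rhat W Z V = dG W Z V - dG Z W V + GG p W (GG p Z V) - GG p Z (GG p W V)" for W Z V
  have CKf: "CK A X Y = dK A X Y + GG p A (KK p X Y) - KK p (GG p A X) Y - KK p X (GG p A Y)" for A X Y
    unfolding CK_def dK_def ca_covK_def ca_K_def[symmetric] ..
  have dCKf: "dCK W Z X Y = ddK W Z X Y + dG W Z (KK p X Y) + GG p Z (dK W X Y) - dK W (GG p Z X) Y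
     - KK p (dG W Z X) Y - dK W X (GG p Z Y) - KK p X (dG W Z Y)" for W Z X Y
    unfolding dCK_def ddK_def dG_def dK_def by (rule dCK_formula[OF p])
  have symK: "ddK W Z X Y = ddK Z W X Y" for W Z X Y
    unfolding ddK_def by (rule VS_schwarz[OF VS_K p])
  have R1: "dCK W Z X Y - dCK Z W X Y + GG p W (CK Z X Y) - GG p Z (CK W X Y) - CK Z (GG p W X) Y + CK W (GG p Z X) Y - CK Z X (GG p W Y) + CK W X (GG p Z Y)
    = Rhat W Z (KK p X Y) - KK p (Rhat W Z X) Y - KK p X (Rhat W Z Y)"
    unfolding Rhat_def
    by (rule ricci_alg[where G="GG p" and K="KK p" and dG=dG and dK=dK and ddK=ddK and CK=CK and dCK=dCK,
          OF LC_lin2[OF p] K_lin1[OF p] K_lin2[OF p] symK CKf dCKf])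
  have CKmu: "CK A X Y = \<mu> p *\<^sub>R (hh p X Y *\<^sub>R A + hh p X A *\<^sub>R Y + hh p Y A *\<^sub>R X)" for A X Y
    unfolding CK_def using cov p by blast
  have dCKmu: "dCK W Z X Y = dmu W *\<^sub>R (hh p X Y *\<^sub>R Z + hh p X Z *\<^sub>R Y + hh p Y Z *\<^sub>R X)
        + \<mu> p *\<^sub>R (dh p W X Y *\<^sub>R Z + dh p W X Z *\<^sub>R Y + dh p W Y Z *\<^sub>R X)" for W Z X Y
    unfolding dCK_def by (rule dCK_mu[OF p mud cov])
  have R2: "dCK W Z X Y - dCK Z W X Y + GG p W (CK Z X Y) - GG p Z (CK W X Y) - CK Z (GG p W X) Y + CK W (GG p Z X) Y - CK Z X (GG p W Y) + CK W X (GG p Z Y)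
    = dmu W *\<^sub>R (hh p X Y *\<^sub>R Z + hh p X Z *\<^sub>R Y + hh p Y Z *\<^sub>R X) - dmu Z *\<^sub>R (hh p X Y *\<^sub>R W + hh p X W *\<^sub>R Y + hh p Y W *\<^sub>R X)"
    by (rule mu_alg[where G="GG p" and h="hh p" and dh="dh p" and CK=CK and dCK=dCK and dmu=dmu and mu="\<mu> p",
          OF LC_lin2[OF p] LC_sym[OF p] h_lin1[OF p] h_sym[OF p] metric_compat[OF p] CKmu dCKmu])
  have NGK: "NN p A B = GG p A B + KK p A B" for A B by (simp add: K_def')
  have dNGK: "dN W A B = dG W A B + dK W A B" for W A B
  proof -
    have "((\<lambda>w. GG w A B + KK w A B) has_derivative (\<lambda>v. frechet_derivative (\<lambda>w. GG w A B) (at p) v + frechet_derivative (\<lambda>w. KK w A B) (at p) v)) (at p)"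
      by (intro has_derivative_add VS_hasd'[OF VS_LC p] VS_hasd'[OF VS_K p])
    then have "frechet_derivative (\<lambda>w. NN w A B) (at p) = (\<lambda>v. frechet_derivative (\<lambda>w. GG w A B) (at p) v + frechet_derivative (\<lambda>w. KK w A B) (at p) v)"
      by (rule fd_cong_open[OF _ p]) (simp add: K_def')
    then show ?thesis unfolding dN_def dG_def dK_def by simp
  qed
  have CKs: "CK W Z V = CK Z W V" for W Z V
  proof -
    have e: "hh p W Z = hh p Z W" "hh p V W = hh p W V" "hh p V Z = hh p Z V" using h_sym[OF p] by auto
    show ?thesis unfolding CKmu e by (simp add: algebra_simps)
  qed
  have R3: "Rhat W Z V = Rh W Z V" for W Z V
  proof -
    have g: "dN W Z V - dN Z W V + NN p W (NN p Z V) - NN p Z (NN p W V) = eps *\<^sub>R (hh p Z V *\<^sub>R W - hh p W V *\<^sub>R Z)"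
      unfolding dN_def by (rule gauss[OF p])
    show ?thesis unfolding Rhat_def Rh_def
      by (rule gauss_alg[where G="GG p" and K="KK p" and N="NN p" and dG=dG and dK=dK and dN=dN and CK=CK
           and R="\<lambda>W Z V. eps *\<^sub>R (hh p Z V *\<^sub>R W - hh p W V *\<^sub>R Z)",
          OF LC_lin2[OF p] K_lin2[OF p] LC_sym[OF p] NGK dNGK CKf CKs g])
  qed
  from trans[OF R2[symmetric] R1] show ?thesis unfolding R3 .
qed

end


lemma cubic3:
  fixes t1 t2 t3 L e k :: real
  assumes q1: "(t1 * t1 - L * t1 + e) * (L - 2 * t1) = k"
    and q2: "(t2 * t2 - L * t2 + e) * (L - 2 * t2) = k"
    and q3: "(t3 * t3 - L * t3 + e) * (L - 2 * t3) = k"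
    and d12: "t1 \<noteq> t2" and d13: "t1 \<noteq> t3" and d23: "t2 \<noteq> t3"
    and l1: "2 * t1 < L" and l2: "2 * t2 < L" and l3: "2 * t3 < L"
  shows False
proof -
  define B where "B a b = -2 * (a * a + a * b + b * b) + 3 * L * (a + b) - (L * L + 2 * e)" for a b
  have f: "(a * a - L * a + e) * (L - 2 * a) - (b * b - L * b + e) * (L - 2 * b) = (a - b) * B a b" for a b
    unfolding B_def by (simp add: algebra_simps)
  have b12: "B t1 t2 = 0" using f[of t1 t2] q1 q2 d12 by simp
  have b13: "B t1 t3 = 0" using f[of t1 t3] q1 q3 d13 by simp
  have g: "B t1 t2 - B t1 t3 = (t2 - t3) * (3 * L - 2 * (t1 + t2 + t3))"
    unfolding B_def by (simp add: algebra_simps)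
  have "3 * L - 2 * (t1 + t2 + t3) = 0" using g b12 b13 d23 by simp
  then show False using l1 l2 l3 by (smt (verit))
qed

context hyp begin

lemma final_rel:
  assumes p: "p \<in> U" and mud: "(\<mu> has_derivative dmu) (at p)"
    and cov: "\<forall>u\<in>U. \<forall>X Y Z. ca_covK eps x u Z X Y =
              \<mu> u *\<^sub>R (hh u X Y *\<^sub>R Z + hh u X Z *\<^sub>R Y + hh u Y Z *\<^sub>R X)"
    and orth: "\<forall>i j. hh p (e i) (e j) = (if i = j then 1 else 0)"
    and eig: "\<forall>i. KK p (e i1) (e i) = lam i *\<^sub>R e i"
    and ii: "i \<noteq> i1"
  shows "dmu (e i) = 0 \<and> (eps - lam i1 * lam i + lam i * lam i) * (lam i1 - 2 * lam i) = - dmu (e i1)"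
proof -
  define E where "E = e i"
  define E1 where "E1 = e i1"
  define c where "c = eps - lam i1 * lam i + lam i * lam i"
  define Rh where "Rh = (\<lambda>W Z V. eps *\<^sub>R (hh p Z V *\<^sub>R W - hh p W V *\<^sub>R Z) - KK p W (KK p Z V) + KK p Z (KK p W V))"
  have h11: "hh p E1 E1 = 1" and h1i: "hh p E1 E = 0" and hi1: "hh p E E1 = 0" and hii: "hh p E E = 1"
    unfolding E_def E1_def using orth ii by auto
  have K11: "KK p E1 E1 = lam i1 *\<^sub>R E1" unfolding E1_def using eig by simp
  have K1i: "KK p E1 E = lam i *\<^sub>R E" unfolding E1_def E_def using eig by simp
  have Ki1: "KK p E E1 = lam i *\<^sub>R E" using K1i K_sym[OF p] by metis
  have Ks1: "KK p (a *\<^sub>R v) w = a *\<^sub>R KK p v w" for a v w using linear_cmul[OF K_lin1[OF p]] by simp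
  have Ks2: "KK p v (a *\<^sub>R w) = a *\<^sub>R KK p v w" for a v w using linear_cmul[OF K_lin2[OF p]] by simp
  have hs2: "hh p v (a *\<^sub>R w) = a * hh p v w" for a v w using linear_cmul[OF h_lin2[OF p]] by simp
  have hs1: "hh p (a *\<^sub>R v) w = a * hh p v w" for a v w using linear_cmul[OF h_lin1[OF p]] by simp
  have ha1: "hh p (v + v') w = hh p v w + hh p v' w" for v v' w using linear_add[OF h_lin1[OF p]] by simp
  have hd1: "hh p (v - v') w = hh p v w - hh p v' w" for v v' w using linear_diff[OF h_lin1[OF p]] by simp
  have RE1: "Rh E E1 E1 = c *\<^sub>R E"
    unfolding Rh_def c_def using h11 hi1 K11 Ki1 K1i by (simp add: Ks1 Ks2 algebra_simps)
  have RK: "Rh E E1 (KK p E1 E1) = (lam i1 * c) *\<^sub>R E"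
    unfolding Rh_def c_def K11 using h11 hi1 Ki1 K1i K11 by (simp add: Ks1 Ks2 hs2 algebra_simps)
  have k: "dmu E *\<^sub>R (hh p E1 E1 *\<^sub>R E1 + hh p E1 E1 *\<^sub>R E1 + hh p E1 E1 *\<^sub>R E1)
       - dmu E1 *\<^sub>R (hh p E1 E1 *\<^sub>R E + hh p E1 E *\<^sub>R E1 + hh p E1 E *\<^sub>R E1)
     = Rh E E1 (KK p E1 E1) - KK p (Rh E E1 E1) E1 - KK p E1 (Rh E E1 E1)"
    unfolding Rh_def by (rule key[OF p mud cov])
  have three: "a *\<^sub>R (v + v + v) = (3 * a) *\<^sub>R v" for a and v :: "real^'n"
  proof -
    have "3 * a = a + a + a" by simp
    then show ?thesis by (simp only: scaleR_add_right scaleR_add_left)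
  qed
  have lhs: "dmu E *\<^sub>R (hh p E1 E1 *\<^sub>R E1 + hh p E1 E1 *\<^sub>R E1 + hh p E1 E1 *\<^sub>R E1)
       - dmu E1 *\<^sub>R (hh p E1 E1 *\<^sub>R E + hh p E1 E *\<^sub>R E1 + hh p E1 E *\<^sub>R E1) = (3 * dmu E) *\<^sub>R E1 - dmu E1 *\<^sub>R E"
    unfolding h11 h1i by (simp only: scaleR_one scaleR_zero_left add_0_right three)
  have rhs: "Rh E E1 (KK p E1 E1) - KK p (Rh E E1 E1) E1 - KK p E1 (Rh E E1 E1) = (c * (lam i1 - 2 * lam i)) *\<^sub>R E"
  proof -
    have "Rh E E1 (KK p E1 E1) - KK p (Rh E E1 E1) E1 - KK p E1 (Rh E E1 E1) = (lam i1 * c) *\<^sub>R E - (c * lam i) *\<^sub>R E - (c * lam i) *\<^sub>R E"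
      unfolding RK RE1 Ks1 Ks2 Ki1 K1i by simp
    also have "\<dots> = (lam i1 * c - c * lam i - c * lam i) *\<^sub>R E" by (simp only: scaleR_diff_left)
    also have "lam i1 * c - c * lam i - c * lam i = c * (lam i1 - 2 * lam i)" by (simp add: algebra_simps)
    finally show ?thesis .
  qed
  have main: "(3 * dmu E) *\<^sub>R E1 - dmu E1 *\<^sub>R E = (c * (lam i1 - 2 * lam i)) *\<^sub>R E"
    using k unfolding lhs rhs .
  have m1: "hh p ((3 * dmu E) *\<^sub>R E1 - dmu E1 *\<^sub>R E) E1 = hh p ((c * (lam i1 - 2 * lam i)) *\<^sub>R E) E1"
    using main by simp
  have m2: "hh p ((3 * dmu E) *\<^sub>R E1 - dmu E1 *\<^sub>R E) E = hh p ((c * (lam i1 - 2 * lam i)) *\<^sub>R E) E"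
    using main by simp
  have "dmu E = 0" using m1 unfolding hd1 hs1 h11 hi1 by simp
  moreover have "c * (lam i1 - 2 * lam i) = - dmu E1" using m2 unfolding hd1 hs1 h1i hii by simp
  ultimately show ?thesis unfolding E_def E1_def c_def by simp
qed

end


lemma card_le2:
  assumes "finite A" and "\<And>a b c. a \<in> A \<Longrightarrow> b \<in> A \<Longrightarrow> c \<in> A \<Longrightarrow> a = b \<or> a = c \<or> b = c"
  shows "card A \<le> 2"
proof (cases "A = {}")
  case True then show ?thesis by simp
next
  case False
  then obtain a where a: "a \<in> A" by blast
  show ?thesis
  proof (cases "A - {a} = {}")
    case True
    then have "A = {a}" using a by blast
    then show ?thesis by simp
  next
    case False
    then obtain b where b: "b \<in> A" "b \<noteq> a" by blast
    have "A \<subseteq> {a, b}" using assms(2)[OF a b(1)] b by blast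
    then have "card A \<le> card {a, b}" by (rule card_mono[rotated]) simp
    also have "\<dots> \<le> 2" by (simp add: card_insert_if)
    finally show ?thesis .
  qed
qed

theorem lemma4p1:
  fixes U :: "(real^'n) set" and x :: "real^'n \<Rightarrow> real^'m" and eps :: real
    and \<mu> :: "real^'n \<Rightarrow> real" and p :: "real^'n"
    and e :: "'n \<Rightarrow> real^'n" and i1 :: 'n and lam :: "'n \<Rightarrow> real"
  assumes dim: "CARD('m) = CARD('n) + 1"
    and imm: "centroaffine_immersion U x"
    and convex: "loc_strongly_convex eps U x"
    and mu_smooth: "smooth_on U \<mu>"
    and mu_nonconst: "\<exists>u\<in>U. \<exists>v\<in>U. \<mu> u \<noteq> \<mu> v"
    and cov: "\<forall>u\<in>U. \<forall>X Y Z. ca_covK eps x u Z X Y =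
              \<mu> u *\<^sub>R (ca_h eps x u X Y *\<^sub>R Z + ca_h eps x u X Z *\<^sub>R Y + ca_h eps x u Y Z *\<^sub>R X)"
    and pU: "p \<in> U"
    and dmu: "frechet_derivative \<mu> (at p) \<noteq> (\<lambda>v. 0)"
    and orth: "\<forall>i j. ca_h eps x p (e i) (e j) = (if i = j then 1 else 0)"
    and maxi: "\<forall>v. ca_h eps x p v v = 1 \<longrightarrow>
                 ca_h eps x p (ca_K eps x p v v) v \<le> ca_h eps x p (ca_K eps x p (e i1) (e i1)) (e i1)"
    and eig: "\<forall>i. ca_K eps x p (e i1) (e i) = lam i *\<^sub>R e i"
    and ineq: "\<forall>i. i \<noteq> i1 \<longrightarrow> lam i1 \<ge> 2 * lam i"
    and eqcase: "\<forall>i. i \<noteq> i1 \<longrightarrow> lam i1 = 2 * lam i \<longrightarrow>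
                   ca_h eps x p (ca_K eps x p (e i) (e i)) (e i) = 0"
  shows "card (lam ` UNIV) \<le> 3"
proof -
  have opU: "open U" and sx: "smooth_on U x" and immu: "\<forall>u\<in>U. inj (dx x u) \<and> x u \<notin> range (dx x u)"
    using imm unfolding centroaffine_immersion_def by auto
  have epsv: "eps = 1 \<or> eps = -1" and posdef: "\<forall>u\<in>U. \<forall>X. X \<noteq> 0 \<longrightarrow> ca_h eps x u X X > 0"
    using convex unfolding loc_strongly_convex_def by auto
  interpret H: hyp U x eps
    by unfold_locales (use opU sx dim immu epsv posdef in auto)
  define dm where "dm = frechet_derivative \<mu> (at p)"
  have mud: "(\<mu> has_derivative dm) (at p)"
    using mu_smooth pU unfolding smooth_on_def dm_def
    by (metis iter_dd.simps(1) frechet_derivative_works)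
  have rel: "dm (e i) = 0 \<and> (eps - lam i1 * lam i + lam i * lam i) * (lam i1 - 2 * lam i) = - dm (e i1)"
    if "i \<noteq> i1" for i
    by (rule H.final_rel[OF pU mud cov orth eig that])
  have lin: "linear dm" using mud has_derivative_linear by blast
  have d1: "dm (e i1) \<noteq> 0"
  proof
    assume z: "dm (e i1) = 0"
    have all0: "dm (e i) = 0" for i using z rel by (cases "i = i1") auto
    define T where "T c = (\<Sum>i\<in>UNIV. c $ i *\<^sub>R e i)" for c :: "real^'n"
    have lT: "linear T" unfolding T_def
      by (rule linearI) (simp_all add: scaleR_add_left sum.distrib scaleR_sum_right)
    have hT: "ca_h eps x p (T c) (e j) = c $ j" for c j
    proof -
      have "ca_h eps x p (T c) (e j) = (\<Sum>i\<in>UNIV. c $ i * ca_h eps x p (e i) (e j))"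
      proof -
        have "ca_h eps x p (T c) (e j) = (\<Sum>i\<in>UNIV. ca_h eps x p (c $ i *\<^sub>R e i) (e j))"
          unfolding T_def using linear_sum[OF H.h_lin1[OF pU], of "\<lambda>i. c $ i *\<^sub>R e i" UNIV] by (simp add: o_def)
        also have "\<dots> = (\<Sum>i\<in>UNIV. c $ i * ca_h eps x p (e i) (e j))"
          using linear_cmul[OF H.h_lin1[OF pU]] by simp
        finally show ?thesis .
      qed
      also have "\<dots> = (\<Sum>i\<in>UNIV. if i = j then c $ i else 0)" using orth by (intro sum.cong) auto
      also have "\<dots> = c $ j" by simp
      finally show ?thesis .
    qed
    have "inj T"
    proof (rule linear_injective_0[THEN iffD2, OF lT], intro allI impI)
      fix c assume "T c = 0"
      then have "c $ j = 0" for j using hT[of c j] linear_0[OF H.h_lin1[OF pU]] by simp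
      then show "c = 0" by (simp add: vec_eq_iff)
    qed
    then have sT: "surj T" using linear_injective_imp_surjective[OF lT] by blast
    have "dm v = 0" for v
    proof -
      obtain c where "v = T c" using sT by (metis surjD)
      then have "dm v = (\<Sum>i\<in>UNIV. dm (c $ i *\<^sub>R e i))"
        unfolding T_def using linear_sum[OF lin, of "\<lambda>i. c $ i *\<^sub>R e i" UNIV] by (simp add: o_def)
      also have "\<dots> = (\<Sum>i\<in>UNIV. c $ i * dm (e i))" using linear_cmul[OF lin] by simp
      finally have "dm v = (\<Sum>i\<in>UNIV. c $ i * dm (e i))" .
      then show ?thesis using all0 by simp
    qed
    then have "dm = (\<lambda>v. 0)" by auto
    then show False using dmu unfolding dm_def by simp
  qed
  have strict: "2 * lam i < lam i1" if "i \<noteq> i1" for i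
  proof -
    have "lam i1 - 2 * lam i \<noteq> 0" using rel[OF that] d1 by auto
    then show ?thesis using ineq that by force
  qed
  define A where "A = lam ` (UNIV - {i1})"
  have cA: "card A \<le> 2"
  proof (rule card_le2)
    show "finite A" unfolding A_def by simp
  next
    fix a b c assume abc: "a \<in> A" "b \<in> A" "c \<in> A"
    show "a = b \<or> a = c \<or> b = c"
    proof (rule ccontr)
      assume nd: "\<not> (a = b \<or> a = c \<or> b = c)"
      obtain ia ib ic where ia: "ia \<noteq> i1" "a = lam ia" and ib: "ib \<noteq> i1" "b = lam ib" and ic: "ic \<noteq> i1" "c = lam ic"
        using abc unfolding A_def by blast
      have q: "(t * t - lam i1 * t + eps) * (lam i1 - 2 * t) = - dm (e i1)" if "t = lam j" "j \<noteq> i1" for t j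
        using rel[OF that(2)] that(1) by (simp add: algebra_simps)
      show False
        by (rule cubic3[OF q[OF ia(2) ia(1)] q[OF ib(2) ib(1)] q[OF ic(2) ic(1)]])
           (use nd ia ib ic strict in auto)
    qed
  qed
  have "lam ` UNIV = insert (lam i1) A" unfolding A_def by blast
  then have "card (lam ` UNIV) \<le> Suc (card A)" by (simp add: card_insert_le_m1 card_insert_if)
  then show ?thesis using cA by simp
qed


end
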